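(* Let $E$ be a locally complete lcHs over $\mathbb{C}$, $z_0\in\mathbb{C}$ and $r\in(0,\infty]$. Then $\Bigl(f\mapsto\sum_{n=0}^k\frac{(\partial^n_{\mathbb{C}})^Ef(z_0)}{n!}(\cdot-z_0)^n\Bigr)_{k\in\mathbb{N}_0}$ is a Schauder decomposition of $\mathcal{O}(\mathbb{D}_r(z_0),E)$ and \[ f=\sum_{n=0}^\infty\frac{(\partial^n_{\mathbb{C}})^Ef(z_0)}{n!}(\cdot-z_0)^n,\quad f\in\mathcal{O}(\mathbb{D}_r(z_0),E), \] with convergence in $\mathcal{O}(\mathbb{D}_r(z_0),E)$.
   Context: An lcHs $E$ is locally complete if for every closed bounded absolutely convex $D\subset E$ the space $E_D=\bigcup_n nD$ normed by the gauge of $D$ is a Banach space. $\mathbb{D}_r(z_0)$ is the open disc of radius $r$ about $z_0$. $\mathcal{O}(\Omega,E)$ is the space of $f\colon\Omega\to E$ for which $(\partial^1_{\mathbb{C}})^Ef(z):=\lim_{h\to0,h\in\mathbb{C}\setminus\{0\}}(f(z+h)-f(z))/h$ exists in $E$ for every $z\in\Omega$, with higher complex derivatives $(\partial^0_{\mathbb{C}})^Ef:=f$, $(\partial^{n+1}_{\mathbb{C}})^Ef:=(\partial^1_{\mathbb{C}})^E((\partial^n_{\mathbb{C}})^Ef)$; it carries the seminorms $\sup_{z\in K}p_\alpha(f(z))$, $K\subset\Omega$ compact, $(p_\alpha)$ seminorms of $E$. A Schauder decomposition of an lcHs $X$ is a sequence of continuous linear projections $P_k$ with $P_kP_j=P_{\min(j,k)}$,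 $P_k\ne P_j$ for $k\ne j$, and $P_kx\to x$ for all $x$. *)

theory Defs
  imports "HOL-Analysis.Analysis"
begin

text \<open>Complex vector spaces are modelled by an additive group type 'a together with a
scalar multiplication smul satisfying the axioms of the library locale vector_space.
Locally convex topologies are given by families of seminorms.\<close>

definition seminorm :: "(complex \<Rightarrow> 'a::ab_group_add \<Rightarrow> 'a) \<Rightarrow> ('a \<Rightarrow> real) \<Rightarrow> bool" where
  "seminorm smul p \<longleftrightarrow> (\<forall>x y. p (x + y) \<le> p x + p y) \<and> (\<forall>c x. p (smul c x) = cmod c * p x)"

text \<open>Topology on a carrier S induced by a family D of pseudometrics (used both for the
seminorm topology of E, with D = {(x,y) |-> p(x - y)}, and for the topology of
compact convergence on O(Omega,E)).\<close>

definition pm_topology :: "'a set \<Rightarrow> ('a \<Rightarrow> 'a \<Rightarrow> real) set \<Rightarrow> 'a topology" where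
  "pm_topology S D = topology (\<lambda>U. U \<subseteq> S \<and> (\<forall>x\<in>U. \<exists>F e. finite F \<and> F \<subseteq> D \<and> e > 0 \<and>
       {y \<in> S. \<forall>d\<in>F. d x y < e} \<subseteq> U))"

definition sn_topology :: "('a::ab_group_add \<Rightarrow> real) set \<Rightarrow> 'a topology" where
  "sn_topology P = pm_topology UNIV ((\<lambda>p x y. p (x - y)) ` P)"

definition lcHs :: "(complex \<Rightarrow> 'a::ab_group_add \<Rightarrow> 'a) \<Rightarrow> ('a \<Rightarrow> real) set \<Rightarrow> bool" where
  "lcHs smul P \<longleftrightarrow> vector_space smul \<and> (\<forall>p\<in>P. seminorm smul p) \<and>
     (\<forall>x. x \<noteq> 0 \<longrightarrow> (\<exists>p\<in>P. p x \<noteq> 0))"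

definition lc_bounded :: "('a \<Rightarrow> real) set \<Rightarrow> 'a set \<Rightarrow> bool" where
  "lc_bounded P B \<longleftrightarrow> (\<forall>p\<in>P. bdd_above (p ` B))"

definition abs_convex :: "(complex \<Rightarrow> 'a::ab_group_add \<Rightarrow> 'a) \<Rightarrow> 'a set \<Rightarrow> bool" where
  "abs_convex smul B \<longleftrightarrow> (\<forall>x\<in>B. \<forall>y\<in>B. \<forall>a b. cmod a + cmod b \<le> 1 \<longrightarrow> smul a x + smul b y \<in> B)"

definition span_set :: "(complex \<Rightarrow> 'a \<Rightarrow> 'a) \<Rightarrow> 'a set \<Rightarrow> 'a set" where
  "span_set smul B = {x. \<exists>n::nat. \<exists>b\<in>B. x = smul (of_nat n) b}"

definition gauge :: "(complex \<Rightarrow> 'a \<Rightarrow> 'a) \<Rightarrow> 'a set \<Rightarrow> 'a \<Rightarrow> real" where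
  "gauge smul B x = Inf {t::real. t > 0 \<and> x \<in> smul (complex_of_real t) ` B}"

definition banach_gauge :: "(complex \<Rightarrow> 'a::ab_group_add \<Rightarrow> 'a) \<Rightarrow> 'a set \<Rightarrow> bool" where
  "banach_gauge smul B \<longleftrightarrow>
     (\<forall>x\<in>span_set smul B. gauge smul B x = 0 \<longrightarrow> x = 0) \<and>
     (\<forall>x. (\<forall>n. x n \<in> span_set smul B) \<longrightarrow>
          (\<forall>e>0. \<exists>N. \<forall>m\<ge>N. \<forall>n\<ge>N. gauge smul B (x m - x n) < e) \<longrightarrow>
          (\<exists>y\<in>span_set smul B. (\<lambda>n. gauge smul B (x n - y)) \<longlonglongrightarrow> 0))"

definition locally_complete :: "(complex \<Rightarrow> 'a::ab_group_add \<Rightarrow> 'a) \<Rightarrow> ('a \<Rightarrow> real) set \<Rightarrow> bool" where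
  "locally_complete smul P \<longleftrightarrow>
     (\<forall>B. closedin (sn_topology P) B \<and> lc_bounded P B \<and> abs_convex smul B \<longrightarrow> banach_gauge smul B)"

definition has_cderiv :: "(complex \<Rightarrow> 'a::ab_group_add \<Rightarrow> 'a) \<Rightarrow> ('a \<Rightarrow> real) set \<Rightarrow>
    (complex \<Rightarrow> 'a) \<Rightarrow> complex \<Rightarrow> 'a \<Rightarrow> bool" where
  "has_cderiv smul P f z d \<longleftrightarrow>
     limitin (sn_topology P) (\<lambda>h. smul (inverse h) (f (z + h) - f z)) d (at 0)"

definition cderiv :: "(complex \<Rightarrow> 'a::ab_group_add \<Rightarrow> 'a) \<Rightarrow> ('a \<Rightarrow> real) set \<Rightarrow>
    (complex \<Rightarrow> 'a) \<Rightarrow> complex \<Rightarrow> 'a" where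
  "cderiv smul P f z = (THE d. has_cderiv smul P f z d)"

fun cderiv_n :: "(complex \<Rightarrow> 'a::ab_group_add \<Rightarrow> 'a) \<Rightarrow> ('a \<Rightarrow> real) set \<Rightarrow> nat \<Rightarrow>
    (complex \<Rightarrow> 'a) \<Rightarrow> complex \<Rightarrow> 'a" where
  "cderiv_n smul P 0 f = f"
| "cderiv_n smul P (Suc n) f = cderiv smul P (cderiv_n smul P n f)"

text \<open>O(Omega,E): functions Omega -> E, represented as functions on the whole plane that
vanish outside Omega, which are complex differentiable at every point of Omega.\<close>

definition holo :: "(complex \<Rightarrow> 'a::ab_group_add \<Rightarrow> 'a) \<Rightarrow> ('a \<Rightarrow> real) set \<Rightarrow> complex set \<Rightarrow>
    (complex \<Rightarrow> 'a) set" where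
  "holo smul P \<Omega> = {f. (\<forall>z\<in>\<Omega>. \<exists>d. has_cderiv smul P f z d) \<and> (\<forall>z. z \<notin> \<Omega> \<longrightarrow> f z = 0)}"

definition holo_topology :: "(complex \<Rightarrow> 'a::ab_group_add \<Rightarrow> 'a) \<Rightarrow> ('a \<Rightarrow> real) set \<Rightarrow> complex set \<Rightarrow>
    (complex \<Rightarrow> 'a) topology" where
  "holo_topology smul P \<Omega> = pm_topology (holo smul P \<Omega>)
     {(\<lambda>f g. SUP z\<in>K. p (f z - g z)) | K p. compact K \<and> K \<noteq> {} \<and> K \<subseteq> \<Omega> \<and> p \<in> P}"

definition lin_on :: "(complex \<Rightarrow> 'a::ab_group_add \<Rightarrow> 'a) \<Rightarrow> (complex \<Rightarrow> 'a) set \<Rightarrow>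
    ((complex \<Rightarrow> 'a) \<Rightarrow> (complex \<Rightarrow> 'a)) \<Rightarrow> bool" where
  "lin_on smul S Q \<longleftrightarrow> (\<forall>f\<in>S. \<forall>g\<in>S. \<forall>a b.
      Q (\<lambda>z. smul a (f z) + smul b (g z)) = (\<lambda>z. smul a (Q f z) + smul b (Q g z)))"

definition schauder_decomposition :: "(complex \<Rightarrow> 'a::ab_group_add \<Rightarrow> 'a) \<Rightarrow> (complex \<Rightarrow> 'a) set \<Rightarrow>
    (complex \<Rightarrow> 'a) topology \<Rightarrow> (nat \<Rightarrow> (complex \<Rightarrow> 'a) \<Rightarrow> (complex \<Rightarrow> 'a)) \<Rightarrow> bool" where
  "schauder_decomposition smul S T Q \<longleftrightarrow>
     (\<forall>k. continuous_map T T (Q k) \<and> lin_on smul S (Q k)) \<and>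
     (\<forall>k j. \<forall>f\<in>S. Q k (Q j f) = Q (min j k) f) \<and>
     (\<forall>k j. k \<noteq> j \<longrightarrow> (\<exists>f\<in>S. Q k f \<noteq> Q j f)) \<and>
     (\<forall>f\<in>S. limitin T (\<lambda>k. Q k f) f sequentially)"

definition disc :: "complex \<Rightarrow> ereal \<Rightarrow> complex set" where
  "disc z0 r = {z. ereal (cmod (z - z0)) < r}"

definition taylor_proj :: "(complex \<Rightarrow> 'a::ab_group_add \<Rightarrow> 'a) \<Rightarrow> ('a \<Rightarrow> real) set \<Rightarrow>
    complex \<Rightarrow> ereal \<Rightarrow> nat \<Rightarrow> (complex \<Rightarrow> 'a) \<Rightarrow> (complex \<Rightarrow> 'a)" where
  "taylor_proj smul P z0 r k f = (\<lambda>z. if z \<in> disc z0 r then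
      (\<Sum>n\<le>k. smul ((z - z0) ^ n / of_nat (fact n)) (cderiv_n smul P n f z0)) else 0)"

end

theory Submission
  imports Defs "HOL-Complex_Analysis.Complex_Analysis"
begin


lemma pm_istopology:
  fixes D :: "('a \<Rightarrow> 'a \<Rightarrow> real) set"
  shows "istopology (\<lambda>U. U \<subseteq> S \<and> (\<forall>x\<in>U. \<exists>F e. finite F \<and> F \<subseteq> D \<and> e > 0 \<and>
       {y \<in> S. \<forall>d\<in>F. d x y < e} \<subseteq> U))"
  unfolding istopology_def
proof (rule conjI; intro allI impI)
  fix A B assume A: "A \<subseteq> S \<and> (\<forall>x\<in>A. \<exists>F e. finite F \<and> F \<subseteq> D \<and> e > 0 \<and> {y \<in> S. \<forall>d\<in>F. d x y < e} \<subseteq> A)"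
    and B: "B \<subseteq> S \<and> (\<forall>x\<in>B. \<exists>F e. finite F \<and> F \<subseteq> D \<and> e > 0 \<and> {y \<in> S. \<forall>d\<in>F. d x y < e} \<subseteq> B)"
  show "A \<inter> B \<subseteq> S \<and> (\<forall>x\<in>A \<inter> B. \<exists>F e. finite F \<and> F \<subseteq> D \<and> e > 0 \<and> {y \<in> S. \<forall>d\<in>F. d x y < e} \<subseteq> A \<inter> B)"
  proof (intro conjI ballI)
    show "A \<inter> B \<subseteq> S" using A by blast
    fix x assume x: "x \<in> A \<inter> B"
    from x A obtain F1 e1 where 1: "finite F1" "F1 \<subseteq> D" "e1 > 0" "{y \<in> S. \<forall>d\<in>F1. d x y < e1} \<subseteq> A"
      by auto
    from x B obtain F2 e2 where 2: "finite F2" "F2 \<subseteq> D" "e2 > 0" "{y \<in> S. \<forall>d\<in>F2. d x y < e2} \<subseteq> B"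
      by auto
    have "{y \<in> S. \<forall>d\<in>F1 \<union> F2. d x y < min e1 e2} \<subseteq> A \<inter> B"
    proof
      fix y assume y: "y \<in> {y \<in> S. \<forall>d\<in>F1 \<union> F2. d x y < min e1 e2}"
      then have "y \<in> {y \<in> S. \<forall>d\<in>F1. d x y < e1}" "y \<in> {y \<in> S. \<forall>d\<in>F2. d x y < e2}" by auto
      then show "y \<in> A \<inter> B" using 1(4) 2(4) by blast
    qed
    then show "\<exists>F e. finite F \<and> F \<subseteq> D \<and> e > 0 \<and> {y \<in> S. \<forall>d\<in>F. d x y < e} \<subseteq> A \<inter> B"
      using 1 2 by (intro exI[of _ "F1 \<union> F2"] exI[of _ "min e1 e2"]) auto
  qed
next
  fix K :: "'a set set"
  assume K: "\<forall>A\<in>K. A \<subseteq> S \<and> (\<forall>x\<in>A. \<exists>F e. finite F \<and> F \<subseteq> D \<and> e > 0 \<and> {y \<in> S. \<forall>d\<in>F. d x y < e} \<subseteq> A)"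
  show "\<Union>K \<subseteq> S \<and> (\<forall>x\<in>\<Union>K. \<exists>F e. finite F \<and> F \<subseteq> D \<and> e > 0 \<and> {y \<in> S. \<forall>d\<in>F. d x y < e} \<subseteq> \<Union>K)"
  proof (intro conjI ballI)
    show "\<Union>K \<subseteq> S" using K by blast
    fix x assume "x \<in> \<Union>K"
    then obtain A where A: "A \<in> K" "x \<in> A" by blast
    then have "\<exists>F e. finite F \<and> F \<subseteq> D \<and> e > 0 \<and> {y \<in> S. \<forall>d\<in>F. d x y < e} \<subseteq> A"
      using K by simp
    then obtain F e where Fe: "finite F" "F \<subseteq> D" "e > 0" "{y \<in> S. \<forall>d\<in>F. d x y < e} \<subseteq> A"
      by blast
    have "{y \<in> S. \<forall>d\<in>F. d x y < e} \<subseteq> \<Union>K" using Fe(4) A(1) by (rule subset_trans[OF _ Union_upper])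
    then show "\<exists>F e. finite F \<and> F \<subseteq> D \<and> e > 0 \<and> {y \<in> S. \<forall>d\<in>F. d x y < e} \<subseteq> \<Union>K"
      using Fe by blast
  qed
qed

lemma pm_openin:
  "openin (pm_topology S D) U \<longleftrightarrow> U \<subseteq> S \<and> (\<forall>x\<in>U. \<exists>F e. finite F \<and> F \<subseteq> D \<and> e > 0 \<and>
       {y \<in> S. \<forall>d\<in>F. d x y < e} \<subseteq> U)"
  unfolding pm_topology_def by (subst topology_inverse'[OF pm_istopology]) (rule refl)

lemma pm_topspace: "topspace (pm_topology S D) = S"
proof -
  have "openin (pm_topology S D) S" unfolding pm_openin
  proof (intro conjI ballI subset_refl)
    fix x assume "x \<in> S"
    show "\<exists>F e. finite F \<and> F \<subseteq> D \<and> e > 0 \<and> {y \<in> S. \<forall>d\<in>F. d x y < e} \<subseteq> S"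
      by (rule exI[of _ "{}"], rule exI[of _ 1]) auto
  qed
  moreover have "\<And>U. openin (pm_topology S D) U \<Longrightarrow> U \<subseteq> S" unfolding pm_openin by blast
  ultimately show ?thesis unfolding topspace_def by blast
qed

lemma pm_limitin_suff:
  assumes "l \<in> S" "eventually (\<lambda>x. f x \<in> S) F"
    and "\<And>d e. d \<in> D \<Longrightarrow> e > 0 \<Longrightarrow> eventually (\<lambda>x. d l (f x) < e) F"
  shows "limitin (pm_topology S D) f l F"
  unfolding limitin_def pm_topspace
proof (intro conjI allI impI)
  show "l \<in> S" by fact
  fix U assume "openin (pm_topology S D) U \<and> l \<in> U"
  then obtain G e where G: "finite G" "G \<subseteq> D" "e > 0" "{y \<in> S. \<forall>d\<in>G. d l y < e} \<subseteq> U"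
    unfolding pm_openin by blast
  have "eventually (\<lambda>x. \<forall>d\<in>G. d l (f x) < e) F"
    using G assms(3) by (simp add: eventually_ball_finite subset_iff)
  with assms(2) show "eventually (\<lambda>x. f x \<in> U) F"
    by eventually_elim (use G(4) in blast)
qed




locale lcs = vector_space smul for smul :: "complex \<Rightarrow> 'a::ab_group_add \<Rightarrow> 'a" +
  fixes P :: "('a \<Rightarrow> real) set"
  assumes semi: "p \<in> P \<Longrightarrow> seminorm smul p"
    and sep: "x \<noteq> 0 \<Longrightarrow> \<exists>p\<in>P. p x \<noteq> 0"
begin

context fixes p assumes pP: "p \<in> P"
begin

lemma p_add: "p (x + y) \<le> p x + p y"
  using semi[OF pP] unfolding seminorm_def by blast

lemma p_smul: "p (smul c x) = cmod c * p x"
  using semi[OF pP] unfolding seminorm_def by blast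

lemma p_zero[simp]: "p 0 = 0"
  using p_smul[of 0 0] by simp

lemma p_minus: "p (- x) = p x"
  using p_smul[of "-1" x] by simp

lemma p_nonneg: "p x \<ge> 0"
proof -
  have "p 0 \<le> p x + p (- x)" using p_add[of x "-x"] by simp
  then show ?thesis by (simp add: p_minus)
qed

lemma p_diff_commute: "p (x - y) = p (y - x)"
  using p_minus[of "x - y"] by simp

lemma p_diff_le: "p (x - z) \<le> p (x - y) + p (y - z)"
  using p_add[of "x - y" "y - z"] by simp

lemma p_diff: "p (x - y) \<le> p x + p y"
  using p_add[of x "- y"] by (simp add: p_minus)

lemma p_abs_diff: "\<bar>p x - p y\<bar> \<le> p (x - y)"
proof -
  have "p x \<le> p (x - y) + p y" using p_add[of "x - y" y] by simp
  moreover have "p y \<le> p (y - x) + p x" using p_add[of "y - x" x] by simp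
  ultimately show ?thesis by (simp add: p_diff_commute)
qed

lemma p_sum: "p (sum f A) \<le> (\<Sum>a\<in>A. p (f a))"
proof (induction A rule: infinite_finite_induct)
  case (insert a A)
  then show ?case using p_add[of "f a" "sum f A"] by simp
qed auto

end

lemma sn_limitin_iff:
  "limitin (sn_topology P) f l F \<longleftrightarrow> (\<forall>p\<in>P. \<forall>e>0. eventually (\<lambda>x. p (f x - l) < e) F)"
proof
  assume L: "limitin (sn_topology P) f l F"
  show "\<forall>p\<in>P. \<forall>e>0. eventually (\<lambda>x. p (f x - l) < e) F"
  proof (intro ballI allI impI)
    fix p e assume pP: "p \<in> P" and e: "(e::real) > 0"
    define U where "U = {y. p (y - l) < e}"
    have "openin (sn_topology P) U"
      unfolding sn_topology_def pm_openin
    proof (intro conjI ballI)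
      show "U \<subseteq> UNIV" by simp
      fix y assume "y \<in> U"
      then have e': "e - p (y - l) > 0" unfolding U_def by simp
      have "{z \<in> UNIV. \<forall>d\<in>{\<lambda>x y. p (x - y)}. d y z < e - p (y - l)} \<subseteq> U"
      proof
        fix z assume "z \<in> {z \<in> UNIV. \<forall>d\<in>{\<lambda>x y. p (x - y)}. d y z < e - p (y - l)}"
        then have "p (y - z) < e - p (y - l)" by simp
        moreover have "p (z - l) \<le> p (z - y) + p (y - l)" by (rule p_diff_le[OF pP])
        moreover have "p (z - y) = p (y - z)" by (rule p_diff_commute[OF pP])
        ultimately show "z \<in> U" unfolding U_def by simp
      qed
      moreover have "{\<lambda>x y. p (x - y)} \<subseteq> (\<lambda>p x y. p (x - y)) ` P" using pP by blast
      ultimately show "\<exists>F e. finite F \<and> F \<subseteq> (\<lambda>p x y. p (x - y)) ` P \<and> e > 0 \<and>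
           {z \<in> UNIV. \<forall>d\<in>F. d y z < e} \<subseteq> U"
        using e' by (intro exI[of _ "{\<lambda>x y. p (x - y)}"] exI[of _ "e - p (y - l)"]) simp
    qed
    moreover have "l \<in> U" unfolding U_def using e pP by simp
    ultimately have "eventually (\<lambda>x. f x \<in> U) F" using L unfolding limitin_def by blast
    then show "eventually (\<lambda>x. p (f x - l) < e) F" unfolding U_def by simp
  qed
next
  assume R: "\<forall>p\<in>P. \<forall>e>0. eventually (\<lambda>x. p (f x - l) < e) F"
  show "limitin (sn_topology P) f l F"
    unfolding sn_topology_def
  proof (rule pm_limitin_suff)
    fix d and e :: real assume "d \<in> (\<lambda>p x y. p (x - y)) ` P" "e > 0"
    then obtain p where pP: "p \<in> P" and d: "d = (\<lambda>x y. p (x - y))" by blast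
    have "eventually (\<lambda>x. p (f x - l) < e) F" using R pP \<open>e > 0\<close> by blast
    then show "eventually (\<lambda>x. d l (f x) < e) F"
      by eventually_elim (simp add: d p_diff_commute[OF pP])
  qed auto
qed

lemma has_cderiv_iff:
  "has_cderiv smul P f z d \<longleftrightarrow>
    (\<forall>p\<in>P. \<forall>e>0. eventually (\<lambda>h. p (smul (inverse h) (f (z + h) - f z) - d) < e) (at 0))"
  unfolding has_cderiv_def sn_limitin_iff by (rule refl)

lemma eq_if_p_zero: "(\<And>p. p \<in> P \<Longrightarrow> p (x - y) = 0) \<Longrightarrow> x = y"
  using sep[of "x - y"] by auto

lemma has_cderiv_unique:
  assumes "has_cderiv smul P f z d1" "has_cderiv smul P f z d2"
  shows "d1 = d2"
proof (rule eq_if_p_zero)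
  fix p assume pP: "p \<in> P"
  show "p (d1 - d2) = 0"
  proof (rule ccontr)
    assume "p (d1 - d2) \<noteq> 0"
    then have e: "p (d1 - d2) / 2 > 0" using p_nonneg[OF pP, of "d1 - d2"] by simp
    have "eventually (\<lambda>h. p (smul (inverse h) (f (z + h) - f z) - d1) < p (d1 - d2) / 2) (at 0)"
      "eventually (\<lambda>h. p (smul (inverse h) (f (z + h) - f z) - d2) < p (d1 - d2) / 2) (at 0)"
      using assms pP e unfolding has_cderiv_iff by blast+
    then have "eventually (\<lambda>h::complex. False) (at 0)"
    proof eventually_elim
      case (elim h)
      let ?q = "smul (inverse h) (f (z + h) - f z)"
      have "p (d1 - d2) \<le> p (d1 - ?q) + p (?q - d2)" by (rule p_diff_le[OF pP])
      also have "p (d1 - ?q) = p (?q - d1)" by (rule p_diff_commute[OF pP])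
      finally show False using elim by simp
    qed
    then show False by simp
  qed
qed

lemma cderiv_eq: "has_cderiv smul P f z d \<Longrightarrow> cderiv smul P f z = d"
  unfolding cderiv_def using has_cderiv_unique by blast

lemma has_cderiv_local_bound:
  assumes "has_cderiv smul P f z d" "p \<in> P"
  shows "eventually (\<lambda>h. p (f (z + h) - f z) \<le> cmod h * (p d + 1)) (at 0)"
proof -
  have "eventually (\<lambda>h. p (smul (inverse h) (f (z + h) - f z) - d) < 1) (at 0)"
    using assms unfolding has_cderiv_iff by simp
  moreover have "eventually (\<lambda>h::complex. h \<noteq> 0) (at 0)" by (simp add: eventually_at_filter)
  ultimately show ?thesis
  proof eventually_elim
    case (elim h)
    define q where "q = smul (inverse h) (f (z + h) - f z)"
    have "f (z + h) - f z = smul h q" using elim(2) by (simp add: q_def)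
    then have "p (f (z + h) - f z) = cmod h * p q" using p_smul[OF assms(2)] by simp
    moreover have "p q \<le> p (q - d) + p d" using p_add[OF assms(2), of "q - d" d] by simp
    ultimately show ?case using elim(1) unfolding q_def[symmetric]
      by (simp add: mult_left_mono)
  qed
qed

lemma has_cderiv_isCont:
  assumes "has_cderiv smul P f z d" "p \<in> P"
  shows "isCont (\<lambda>w. p (f w - c)) z"
proof -
  have ev: "eventually (\<lambda>h. p (f (z + h) - f z) \<le> cmod h * (p d + 1)) (at 0)"
    by (rule has_cderiv_local_bound[OF assms])
  have "((\<lambda>h. p (f (z + h) - c)) \<longlongrightarrow> p (f z - c)) (at 0)"
  proof (rule tendstoI)
    fix e :: real assume e: "e > 0"
    have "eventually (\<lambda>h::complex. cmod h < e / (p d + 1)) (at 0)"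
    proof -
      have "p d + 1 > 0" using p_nonneg[OF assms(2), of d] by simp
      then have "e / (p d + 1) > 0" using e by simp
      then show ?thesis using eventually_at_filter tendstoD[OF tendsto_norm_zero[OF tendsto_ident_at]]
        by (metis (no_types, lifting) dist_0_norm dist_commute eventually_at)
    qed
    with ev show "eventually (\<lambda>h. dist (p (f (z + h) - c)) (p (f z - c)) < e) (at 0)"
    proof eventually_elim
      case (elim h)
      have pd: "p d + 1 > 0" using p_nonneg[OF assms(2), of d] by simp
      have "dist (p (f (z + h) - c)) (p (f z - c)) \<le> p ((f (z + h) - c) - (f z - c))"
        unfolding dist_real_def by (rule p_abs_diff[OF assms(2)])
      also have "\<dots> = p (f (z + h) - f z)" by simp
      also have "\<dots> \<le> cmod h * (p d + 1)" by (rule elim(1))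
      also have "\<dots> < e" using elim(2) pd by (simp add: pos_less_divide_eq)
      finally show ?case .
    qed
  qed
  then show ?thesis
    by (simp add: isCont_def LIM_offset_zero_iff)
qed

end




definition lin_fun :: "(complex \<Rightarrow> 'a::ab_group_add \<Rightarrow> 'a) \<Rightarrow> ('a \<Rightarrow> complex) \<Rightarrow> bool" where
  "lin_fun smul \<phi> \<longleftrightarrow> (\<forall>a b x y. \<phi> (smul a x + smul b y) = a * \<phi> x + b * \<phi> y)"

context lcs
begin

definition good :: "('a \<Rightarrow> real) \<Rightarrow> ('a \<times> real) set \<Rightarrow> bool" where
  "good p G \<longleftrightarrow> (\<forall>x a y b s t. (x, a) \<in> G \<longrightarrow> (y, b) \<in> G \<longrightarrow>
       (smul (of_real s) x + smul (of_real t) y, s * a + t * b) \<in> G) \<and>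
     (\<forall>x a b. (x, a) \<in> G \<longrightarrow> (x, b) \<in> G \<longrightarrow> a = b) \<and>
     (\<forall>x a. (x, a) \<in> G \<longrightarrow> a \<le> p x)"

lemma real_hb:
  assumes pP: "p \<in> P"
  shows "\<exists>\<psi>. (\<forall>s t x y. \<psi> (smul (of_real s) x + smul (of_real t) y) = s * \<psi> x + t * \<psi> y) \<and>
      (\<forall>y. \<psi> y \<le> p y) \<and> \<psi> x0 = p x0"
proof -
  define G0 where "G0 = {(smul (of_real t) x0, t * p x0) | t. True}"
  define A where "A = {G. good p G \<and> G0 \<subseteq> G}"
  have G0good: "good p G0"
    unfolding good_def
  proof (intro conjI allI impI)
    fix x a y b s t assume "(x, a) \<in> G0" "(y, b) \<in> G0"
    then obtain t1 t2 where "x = smul (of_real t1) x0" "a = t1 * p x0" "y = smul (of_real t2) x0" "b = t2 * p x0"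
      unfolding G0_def by blast
    then have "smul (of_real s) x + smul (of_real t) y = smul (of_real (s * t1 + t * t2)) x0"
      "s * a + t * b = (s * t1 + t * t2) * p x0"
      by (simp_all add: scale_left_distrib algebra_simps)
    then show "(smul (of_real s) x + smul (of_real t) y, s * a + t * b) \<in> G0"
      unfolding G0_def by blast
  next
    fix x a b assume "(x, a) \<in> G0" "(x, b) \<in> G0"
    then obtain t1 t2 where "x = smul (of_real t1) x0" "a = t1 * p x0" "x = smul (of_real t2) x0" "b = t2 * p x0"
      unfolding G0_def by blast
    then show "a = b" by (cases "x0 = 0") (auto simp: pP)
  next
    fix x a assume "(x, a) \<in> G0"
    then obtain t where "x = smul (of_real t) x0" "a = t * p x0"
      unfolding G0_def by blast
    then show "a \<le> p x" using p_smul[OF pP, of "of_real t" x0] p_nonneg[OF pP, of x0]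
      by (simp add: mult_right_mono)
  qed
  have "\<exists>M\<in>A. \<forall>X\<in>A. M \<subseteq> X \<longrightarrow> X = M"
  proof (rule Zorn_Lemma2, intro ballI)
    fix C assume C: "C \<in> chains A"
    show "\<exists>U\<in>A. \<forall>X\<in>C. X \<subseteq> U"
    proof (cases "C = {}")
      case True
      then show ?thesis using G0good unfolding A_def by blast
    next
      case False
      have CA: "C \<subseteq> A" and ch: "\<And>X Y. X \<in> C \<Longrightarrow> Y \<in> C \<Longrightarrow> X \<subseteq> Y \<or> Y \<subseteq> X"
        using C unfolding chains_def chain_subset_def by blast+
      have two: "\<exists>X\<in>C. u \<in> X \<and> w \<in> X" if uw: "u \<in> \<Union>C" "w \<in> \<Union>C" for u w
      proof -
        obtain X Y where "X \<in> C" "Y \<in> C" "u \<in> X" "w \<in> Y" using uw by blast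
        then show ?thesis using ch[of X Y] by blast
      qed
      have "good p (\<Union>C)"
        unfolding good_def
      proof (intro conjI allI impI)
        fix x a y b s t assume "(x, a) \<in> \<Union>C" "(y, b) \<in> \<Union>C"
        then obtain X where X: "X \<in> C" "(x, a) \<in> X" "(y, b) \<in> X" using two by blast
        then have "good p X" using CA unfolding A_def by blast
        then have "(smul (of_real s) x + smul (of_real t) y, s * a + t * b) \<in> X"
          using X unfolding good_def by blast
        then show "(smul (of_real s) x + smul (of_real t) y, s * a + t * b) \<in> \<Union>C" using X by blast
      next
        fix x a b assume "(x, a) \<in> \<Union>C" "(x, b) \<in> \<Union>C"
        then obtain X where X: "X \<in> C" "(x, a) \<in> X" "(x, b) \<in> X" using two by blast
        then have "good p X" using CA unfolding A_def by blast
        then show "a = b" using X unfolding good_def by blast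
      next
        fix x a assume "(x, a) \<in> \<Union>C"
        then obtain X where X: "X \<in> C" "(x, a) \<in> X" by blast
        then have "good p X" using CA unfolding A_def by blast
        then show "a \<le> p x" using X unfolding good_def by blast
      qed
      moreover have "G0 \<subseteq> \<Union>C" using False CA unfolding A_def by blast
      ultimately show ?thesis unfolding A_def by blast
    qed
  qed
  then obtain M where MA: "M \<in> A" and Mmax: "\<And>X. X \<in> A \<Longrightarrow> M \<subseteq> X \<Longrightarrow> X = M" by blast
  have Mg: "good p M" and G0M: "G0 \<subseteq> M" using MA unfolding A_def by auto
  have Mlin: "\<And>x a y b s t. (x, a) \<in> M \<Longrightarrow> (y, b) \<in> M \<Longrightarrow>
       (smul (of_real s) x + smul (of_real t) y, s * a + t * b) \<in> M"
    and Mfun: "\<And>x a b. (x, a) \<in> M \<Longrightarrow> (x, b) \<in> M \<Longrightarrow> a = b"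
    and Mdom: "\<And>x a. (x, a) \<in> M \<Longrightarrow> a \<le> p x"
    using Mg unfolding good_def by blast+
  have M0: "(0, 0) \<in> M" using G0M unfolding G0_def by force
  have Mscale: "(smul (of_real s) x, s * a) \<in> M" if "(x, a) \<in> M" for x a s
    using Mlin[OF that M0, of s 0] by simp
  have Madd: "(x + y, a + b) \<in> M" if "(x, a) \<in> M" "(y, b) \<in> M" for x a y b
    using Mlin[OF that, of 1 1] by simp
  have total: "\<exists>c. (v, c) \<in> M" for v
  proof (rule ccontr)
    assume nv: "\<nexists>c. (v, c) \<in> M"
    define L where "L = {a - p (x - v) | x a. (x, a) \<in> M}"
    have key: "a - p (x - v) \<le> p (y + v) - b" if "(x, a) \<in> M" "(y, b) \<in> M" for x a y b
    proof -
      have "a + b \<le> p (x + y)" using Mdom[OF Madd[OF that]] .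
      also have "x + y = (x - v) + (y + v)" by simp
      also have "p \<dots> \<le> p (x - v) + p (y + v)" by (rule p_add[OF pP])
      finally show ?thesis by simp
    qed
    define c where "c = Sup L"
    have Lne: "L \<noteq> {}" using M0 unfolding L_def by blast
    have Lbdd: "bdd_above L" unfolding L_def bdd_above_def using key M0 by blast
    have c_ge: "a - p (x - v) \<le> c" if "(x, a) \<in> M" for x a
      unfolding c_def by (rule cSup_upper[OF _ Lbdd]) (use that L_def in blast)
    have c_le: "c \<le> p (y + v) - b" if "(y, b) \<in> M" for y b
      unfolding c_def by (rule cSup_least[OF Lne]) (use that key L_def in blast)
    define M' where "M' = {(x + smul (of_real t) v, a + t * c) | x a t. (x, a) \<in> M}"
    have MM': "M \<subseteq> M'"
    proof
      fix u assume "u \<in> M"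
      then obtain x a where "u = (x, a)" "(x, a) \<in> M" by (cases u) blast
      then show "u \<in> M'" unfolding M'_def by (intro CollectI exI[of _ x] exI[of _ a] exI[of _ 0]) simp
    qed
    have "good p M'"
      unfolding good_def
    proof (intro conjI allI impI)
      fix x a y b s t assume "(x, a) \<in> M'" "(y, b) \<in> M'"
      then obtain x1 a1 t1 x2 a2 t2 where 1: "x = x1 + smul (of_real t1) v" "a = a1 + t1 * c" "(x1, a1) \<in> M"
        and 2: "y = x2 + smul (of_real t2) v" "b = a2 + t2 * c" "(x2, a2) \<in> M"
        unfolding M'_def by blast
      have "smul (of_real s) x + smul (of_real t) y =
          (smul (of_real s) x1 + smul (of_real t) x2) + smul (of_real (s * t1 + t * t2)) v"
        unfolding 1 2 by (simp add: scale_right_distrib scale_left_distrib algebra_simps)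
      moreover have "s * a + t * b = (s * a1 + t * a2) + (s * t1 + t * t2) * c"
        unfolding 1 2 by (simp add: algebra_simps)
      ultimately show "(smul (of_real s) x + smul (of_real t) y, s * a + t * b) \<in> M'"
        using Mlin[OF 1(3) 2(3), of s t] unfolding M'_def by blast
    next
      fix x a b assume "(x, a) \<in> M'" "(x, b) \<in> M'"
      then obtain x1 a1 t1 x2 a2 t2 where 1: "x = x1 + smul (of_real t1) v" "a = a1 + t1 * c" "(x1, a1) \<in> M"
        and 2: "x = x2 + smul (of_real t2) v" "b = a2 + t2 * c" "(x2, a2) \<in> M"
        unfolding M'_def by blast
      show "a = b"
      proof (cases "t1 = t2")
        case True
        then have "x1 = x2" using 1(1) 2(1) by simp
        then show ?thesis using Mfun[of x1 a1 a2] 1 2 True by simp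
      next
        case False
        have h: "smul (of_real (t2 - t1)) v = x1 - x2" using 1(1) 2(1)
          by (simp add: scale_left_diff_distrib algebra_simps)
        have "v = smul (of_real (1 / (t2 - t1))) (smul (of_real (t2 - t1)) v)"
          using False by simp
        also have "\<dots> = smul (of_real (1 / (t2 - t1))) x1 + smul (of_real (- 1 / (t2 - t1))) x2"
          unfolding h by (simp add: scale_right_diff_distrib)
        finally have veq: "v = smul (of_real (1 / (t2 - t1))) x1 + smul (of_real (- 1 / (t2 - t1))) x2" .
        have "(smul (of_real (1 / (t2 - t1))) x1 + smul (of_real (- 1 / (t2 - t1))) x2,
            (1 / (t2 - t1)) * a1 + (- 1 / (t2 - t1)) * a2) \<in> M"
          by (rule Mlin[OF 1(3) 2(3)])
        then have "(v, (1 / (t2 - t1)) * a1 + (- 1 / (t2 - t1)) * a2) \<in> M"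
          unfolding veq[symmetric] .
        then show ?thesis using nv by blast
      qed
    next
      fix x a assume "(x, a) \<in> M'"
      then obtain x1 a1 t where 1: "x = x1 + smul (of_real t) v" "a = a1 + t * c" "(x1, a1) \<in> M"
        unfolding M'_def by blast
      consider "t = 0" | "t > 0" | "t < 0" by linarith
      then show "a \<le> p x"
      proof cases
        case 1 then show ?thesis using Mdom \<open>(x1, a1) \<in> M\<close> \<open>x = _\<close> \<open>a = _\<close> by simp
      next
        case 2
        have "(smul (of_real (1 / t)) x1, (1 / t) * a1) \<in> M" by (rule Mscale[OF \<open>(x1, a1) \<in> M\<close>])
        then have "c \<le> p (smul (of_real (1 / t)) x1 + v) - (1 / t) * a1" by (rule c_le)
        also have "smul (of_real (1 / t)) x1 + v = smul (of_real (1 / t)) x"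
          using 2 unfolding \<open>x = _\<close> by (simp add: scale_right_distrib)
        also have "p \<dots> = cmod (of_real (1 / t)) * p x" by (rule p_smul[OF pP])
        also have "cmod (of_real (1 / t)) = 1 / t" using 2 by (simp only: norm_of_real) simp
        finally have "t * c \<le> t * ((1 / t) * p x - (1 / t) * a1)"
          using 2 by (simp add: mult_left_mono)
        then have "t * c \<le> p x - a1" using 2 by (simp add: algebra_simps)
        then show ?thesis using \<open>a = _\<close> by simp
      next
        case 3
        have "(smul (of_real (- 1 / t)) x1, (- 1 / t) * a1) \<in> M" by (rule Mscale[OF \<open>(x1, a1) \<in> M\<close>])
        then have "(- 1 / t) * a1 - p (smul (of_real (- 1 / t)) x1 - v) \<le> c" by (rule c_ge)
        also have "smul (of_real (- 1 / t)) x1 - v = smul (of_real (- 1 / t)) x"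
          using 3 unfolding \<open>x = _\<close> by (simp add: scale_right_distrib)
        also have "p \<dots> = cmod (of_real (- 1 / t)) * p x" by (rule p_smul[OF pP])
        also have "cmod (of_real (- 1 / t)) = - 1 / t" using 3 by (simp only: norm_of_real) simp
        finally have "(- t) * ((- 1 / t) * a1 - (- 1 / t) * p x) \<le> (- t) * c"
          using 3 by (simp add: mult_left_mono)
        then have "a1 - p x \<le> - t * c" using 3 by (simp add: algebra_simps)
        then show ?thesis using \<open>a = _\<close> by simp
      qed
    qed
    then have "M' \<in> A" using MM' G0M unfolding A_def by blast
    then have "M' = M" using Mmax MM' by blast
    moreover have "(v, c) \<in> M'" unfolding M'_def using M0 by (intro CollectI exI[of _ 0] exI[of _ 0] exI[of _ 1]) simp
    ultimately show False using nv by blast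
  qed
  define \<psi> where "\<psi> x = (THE a. (x, a) \<in> M)" for x
  have \<psi>M: "(x, \<psi> x) \<in> M" for x
  proof -
    obtain c where "(x, c) \<in> M" using total by blast
    then show ?thesis unfolding \<psi>_def by (rule theI) (rule Mfun[OF _ \<open>(x, c) \<in> M\<close>])
  qed
  have \<psi>eq: "(x, a) \<in> M \<Longrightarrow> \<psi> x = a" for x a using Mfun \<psi>M by blast
  show ?thesis
  proof (intro exI[of _ \<psi>] conjI allI)
    fix s t x y show "\<psi> (smul (of_real s) x + smul (of_real t) y) = s * \<psi> x + t * \<psi> y"
      by (rule \<psi>eq[OF Mlin[OF \<psi>M \<psi>M]])
  next
    fix y show "\<psi> y \<le> p y" using Mdom[OF \<psi>M] .
  next
    have "(smul (of_real 1) x0, 1 * p x0) \<in> M" using G0M unfolding G0_def by blast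
    then show "\<psi> x0 = p x0" using \<psi>eq by simp
  qed
qed

end



context lcs
begin

definition dual :: "('a \<Rightarrow> real) \<Rightarrow> ('a \<Rightarrow> complex) \<Rightarrow> bool" where
  "dual p \<phi> \<longleftrightarrow> lin_fun smul \<phi> \<and> (\<forall>y. cmod (\<phi> y) \<le> p y)"

lemma lin_fun_add: "lin_fun smul \<phi> \<Longrightarrow> \<phi> (x + y) = \<phi> x + \<phi> y"
  unfolding lin_fun_def by (metis mult_1 scale_one)

lemma lin_fun_smul: "lin_fun smul \<phi> \<Longrightarrow> \<phi> (smul c x) = c * \<phi> x"
  unfolding lin_fun_def by (metis add.right_neutral mult_zero_left scale_zero_left)

lemma lin_fun_zero: "lin_fun smul \<phi> \<Longrightarrow> \<phi> 0 = 0"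
  using lin_fun_smul[of \<phi> 0 0] by simp

lemma lin_fun_minus: "lin_fun smul \<phi> \<Longrightarrow> \<phi> (- x) = - \<phi> x"
  using lin_fun_smul[of \<phi> "-1" x] by simp

lemma lin_fun_diff: "lin_fun smul \<phi> \<Longrightarrow> \<phi> (x - y) = \<phi> x - \<phi> y"
  using lin_fun_add[of \<phi> x "- y"] lin_fun_minus[of \<phi> y] by simp

lemma lin_fun_sum: "lin_fun smul \<phi> \<Longrightarrow> \<phi> (sum f A) = (\<Sum>a\<in>A. \<phi> (f a))"
proof (induction A rule: infinite_finite_induct)
  case (infinite A) then show ?case by (simp add: lin_fun_zero)
next
  case empty then show ?case by (simp add: lin_fun_zero)
next
  case (insert a A) then show ?case by (simp add: lin_fun_add)
qed

lemma re_bound_eq: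
  fixes z :: complex
  assumes "Re z = r" "cmod z \<le> r"
  shows "z = of_real r"
proof -
  have r0: "r \<ge> 0" using assms(2) norm_ge_zero order_trans by blast
  have "(cmod z)^2 \<le> r^2" using assms(2) by (simp add: power_mono)
  then have "(Re z)^2 + (Im z)^2 \<le> r^2" by (simp add: cmod_power2)
  then have "Im z = 0" using assms(1) by simp
  then show ?thesis using assms(1) by (simp add: complex_eq_iff)
qed

lemma hahn_banach:
  assumes pP: "p \<in> P"
  shows "\<exists>\<phi>. dual p \<phi> \<and> \<phi> x0 = of_real (p x0)"
proof -
  obtain \<psi> where lin: "\<And>s t x y. \<psi> (smul (of_real s) x + smul (of_real t) y) = s * \<psi> x + t * \<psi> y"
    and dom: "\<And>y. \<psi> y \<le> p y" and x0: "\<psi> x0 = p x0"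
    using real_hb[OF pP] by blast
  have padd: "\<psi> (x + y) = \<psi> x + \<psi> y" for x y using lin[of 1 x 1 y] by simp
  have psc: "\<psi> (smul (of_real s) x) = s * \<psi> x" for s x using lin[of s x 0 x] by simp
  have pmin: "\<psi> (- x) = - \<psi> x" for x using psc[of "-1" x] by simp
  define \<phi> where "\<phi> x = complex_of_real (\<psi> x) - \<i> * complex_of_real (\<psi> (smul \<i> x))" for x
  have fadd: "\<phi> (x + y) = \<phi> x + \<phi> y" for x y
    unfolding \<phi>_def by (simp add: scale_right_distrib padd algebra_simps)
  have fsc: "\<phi> (smul c x) = c * \<phi> x" for c x
  proof -
    define a b where "a = Re c" and "b = Im c"
    have c: "c = complex_of_real a + \<i> * complex_of_real b" unfolding a_def b_def by (simp add: complex_eq)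
    have ii: "smul \<i> (smul \<i> x) = - x" by simp
    have 1: "smul c x = smul (of_real a) x + smul (of_real b) (smul \<i> x)"
      unfolding c by (simp add: scale_left_distrib)
    have 2: "smul \<i> (smul c x) = smul (of_real a) (smul \<i> x) + smul (of_real b) (- x)"
      unfolding c by (simp add: scale_left_distrib scale_right_distrib mult.commute)
    have "\<phi> (smul c x) = of_real (a * \<psi> x + b * \<psi> (smul \<i> x)) - \<i> * of_real (a * \<psi> (smul \<i> x) - b * \<psi> x)"
      unfolding \<phi>_def 1 2[unfolded 1] padd psc pmin using 2 padd psc pmin
      by (simp add: 1)
    also have "\<dots> = c * \<phi> x" unfolding c \<phi>_def by (simp add: algebra_simps)
    finally show ?thesis .
  qed
  have lf: "lin_fun smul \<phi>" unfolding lin_fun_def using fadd fsc by simp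
  have re: "Re (\<phi> x) = \<psi> x" for x unfolding \<phi>_def by simp
  have bnd: "cmod (\<phi> y) \<le> p y" for y
  proof (cases "\<phi> y = 0")
    case True then show ?thesis using p_nonneg[OF pP] by simp
  next
    case False
    define u where "u = cnj (\<phi> y) / cmod (\<phi> y)"
    have "\<phi> (smul u y) = u * \<phi> y" by (rule fsc)
    also have "\<dots> = of_real (cmod (\<phi> y))" unfolding u_def using False
      by (simp add: complex_norm_square[symmetric] power2_eq_square field_simps)
    finally have "cmod (\<phi> y) = \<psi> (smul u y)" using re[of "smul u y"] by simp
    also have "\<dots> \<le> p (smul u y)" by (rule dom)
    also have "\<dots> = cmod u * p y" by (rule p_smul[OF pP])
    also have "cmod u = 1" unfolding u_def using False by (simp add: norm_divide)
    finally show ?thesis by simp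
  qed
  have "\<phi> x0 = of_real (p x0)" by (rule re_bound_eq) (use re x0 bnd in auto)
  then show ?thesis using lf bnd unfolding dual_def by blast
qed

lemma p_attained: "p \<in> P \<Longrightarrow> \<exists>\<phi>. dual p \<phi> \<and> cmod (\<phi> x) = p x"
  using hahn_banach[of p x] p_nonneg[of p x] by force

lemma dual_bound: "dual p \<phi> \<Longrightarrow> cmod (\<phi> y) \<le> p y"
  unfolding dual_def by blast

lemma dual_lin: "dual p \<phi> \<Longrightarrow> lin_fun smul \<phi>"
  unfolding dual_def by blast

lemma eq_by_duals:
  assumes "\<And>p \<phi>. p \<in> P \<Longrightarrow> dual p \<phi> \<Longrightarrow> \<phi> x = \<phi> y"
  shows "x = y"
proof (rule eq_if_p_zero)
  fix p assume pP: "p \<in> P"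
  obtain \<phi> where "dual p \<phi>" "cmod (\<phi> (x - y)) = p (x - y)" using p_attained[OF pP] by blast
  moreover have "\<phi> (x - y) = 0" using assms[OF pP \<open>dual p \<phi>\<close>] lin_fun_diff[OF dual_lin[OF \<open>dual p \<phi>\<close>]] by simp
  ultimately show "p (x - y) = 0" by simp
qed

end



context lcs
begin

definition Hol :: "(complex \<Rightarrow> 'a) \<Rightarrow> complex set \<Rightarrow> bool" where
  "Hol g D \<longleftrightarrow> (\<forall>z\<in>D. \<exists>d. has_cderiv smul P g z d)"

lemma Hol_cderiv: "Hol g D \<Longrightarrow> z \<in> D \<Longrightarrow> has_cderiv smul P g z (cderiv smul P g z)"
  unfolding Hol_def using cderiv_eq by blast

lemma eventually_at0_in_open:
  assumes "open D" "z \<in> D"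
  shows "eventually (\<lambda>h::complex. z + h \<in> D) (at 0)"
proof -
  obtain e where e: "e > 0" "ball z e \<subseteq> D" using assms openE by blast
  have "eventually (\<lambda>h::complex. h \<in> ball 0 e) (at 0)"
    using e(1) by (intro eventually_at_in_open') auto
  then show ?thesis
    by eventually_elim (use e(2) in \<open>auto simp: dist_norm subset_iff\<close>)
qed

lemma dual_has_deriv:
  assumes "p \<in> P" "dual p \<phi>" "has_cderiv smul P g z d"
  shows "((\<lambda>w. \<phi> (g w)) has_field_derivative \<phi> d) (at z)"
  unfolding DERIV_def
proof (rule tendstoI)
  fix e :: real assume e: "e > 0"
  have lf: "lin_fun smul \<phi>" using assms(2) by (rule dual_lin)
  have "eventually (\<lambda>h. p (smul (inverse h) (g (z + h) - g z) - d) < e) (at 0)"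
    using assms(1,3) e unfolding has_cderiv_iff by blast
  then show "eventually (\<lambda>h. dist ((\<phi> (g (z + h)) - \<phi> (g z)) / h) (\<phi> d) < e) (at 0)"
  proof eventually_elim
    case (elim h)
    have "(\<phi> (g (z + h)) - \<phi> (g z)) / h - \<phi> d = \<phi> (smul (inverse h) (g (z + h) - g z) - d)"
      by (simp add: lin_fun_diff[OF lf] lin_fun_smul[OF lf] divide_inverse mult.commute)
    then have "dist ((\<phi> (g (z + h)) - \<phi> (g z)) / h) (\<phi> d) = cmod (\<phi> (smul (inverse h) (g (z + h) - g z) - d))"
      by (simp add: dist_norm)
    also have "\<dots> \<le> p (smul (inverse h) (g (z + h) - g z) - d)" by (rule dual_bound[OF assms(2)])
    finally show ?case using elim by simp
  qed
qed

lemma dual_holo: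
  assumes "p \<in> P" "dual p \<phi>" "Hol g D" "open D"
  shows "(\<lambda>w. \<phi> (g w)) holomorphic_on D"
    and "\<And>w. w \<in> D \<Longrightarrow> deriv (\<lambda>w. \<phi> (g w)) w = \<phi> (cderiv smul P g w)"
proof -
  have d: "((\<lambda>w. \<phi> (g w)) has_field_derivative \<phi> (cderiv smul P g w)) (at w)" if "w \<in> D" for w
    using dual_has_deriv[OF assms(1,2) Hol_cderiv[OF assms(3) that]] .
  show "(\<lambda>w. \<phi> (g w)) holomorphic_on D"
    using d assms(4) by (simp add: holomorphic_on_open) blast
  show "deriv (\<lambda>w. \<phi> (g w)) w = \<phi> (cderiv smul P g w)" if "w \<in> D" for w
    using d[OF that] by (rule DERIV_imp_deriv)
qed

lemma dual_higher:
  assumes "p \<in> P" "dual p \<phi>" "\<And>n. Hol (cderiv_n smul P n g) D" "open D"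
  shows "w \<in> D \<Longrightarrow> \<phi> (cderiv_n smul P n g w) = (deriv ^^ n) (\<lambda>w. \<phi> (g w)) w"
proof (induction n arbitrary: w)
  case 0 then show ?case by simp
next
  case (Suc n)
  have h0: "(\<lambda>w. \<phi> (g w)) holomorphic_on D" using dual_holo(1)[OF assms(1,2) assms(3)[of 0] assms(4)] by simp
  have "\<phi> (cderiv_n smul P (Suc n) g w) = deriv (\<lambda>w. \<phi> (cderiv_n smul P n g w)) w"
    using dual_holo(2)[OF assms(1,2) assms(3)[of n] assms(4) Suc.prems] by simp
  also have "\<dots> = deriv ((deriv ^^ n) (\<lambda>w. \<phi> (g w))) w"
  proof (rule complex_derivative_transform_within_open)
    show "(\<lambda>w. \<phi> (cderiv_n smul P n g w)) holomorphic_on D"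
      by (rule dual_holo(1)[OF assms(1,2) assms(3) assms(4)])
    show "(deriv ^^ n) (\<lambda>w. \<phi> (g w)) holomorphic_on D"
      by (rule holomorphic_higher_deriv[OF h0 assms(4)])
  qed (use Suc assms(4) in auto)
  finally show ?case by simp
qed

lemma has_cderiv_lincomb:
  assumes "has_cderiv smul P f z d1" "has_cderiv smul P g z d2"
  shows "has_cderiv smul P (\<lambda>w. smul a (f w) + smul b (g w)) z (smul a d1 + smul b d2)"
  unfolding has_cderiv_iff
proof (intro ballI allI impI)
  fix p and e :: real assume pP: "p \<in> P" and e: "e > 0"
  define e' where "e' = e / (cmod a + cmod b + 1)"
  have e': "e' > 0" unfolding e'_def using e by (simp add: add_nonneg_pos)
  have "eventually (\<lambda>h. p (smul (inverse h) (f (z + h) - f z) - d1) < e') (at 0)"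
    "eventually (\<lambda>h. p (smul (inverse h) (g (z + h) - g z) - d2) < e') (at 0)"
    using assms pP e' unfolding has_cderiv_iff by blast+
  then show "eventually (\<lambda>h. p (smul (inverse h) (smul a (f (z + h)) + smul b (g (z + h)) -
          (smul a (f z) + smul b (g z))) - (smul a d1 + smul b d2)) < e) (at 0)"
  proof eventually_elim
    case (elim h)
    define q1 where "q1 = smul (inverse h) (f (z + h) - f z) - d1"
    define q2 where "q2 = smul (inverse h) (g (z + h) - g z) - d2"
    have "smul (inverse h) (smul a (f (z + h)) + smul b (g (z + h)) - (smul a (f z) + smul b (g z))) -
        (smul a d1 + smul b d2) = smul a q1 + smul b q2"
      unfolding q1_def q2_def by (simp add: scale_right_distrib scale_right_diff_distrib algebra_simps)
    moreover have "p (smul a q1 + smul b q2) \<le> cmod a * p q1 + cmod b * p q2"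
      using p_add[OF pP, of "smul a q1" "smul b q2"] by (simp add: p_smul[OF pP])
    moreover have "cmod a * p q1 + cmod b * p q2 \<le> cmod a * e' + cmod b * e'"
      using elim unfolding q1_def[symmetric] q2_def[symmetric]
      by (intro add_mono mult_left_mono) auto
    moreover have "cmod a * e' + cmod b * e' < e"
    proof -
      have "(cmod a + cmod b) * e' < (cmod a + cmod b + 1) * e'" using e' by simp
      also have "\<dots> = e"
      proof -
        have "cmod a + cmod b + 1 \<noteq> 0" using norm_ge_zero[of a] norm_ge_zero[of b] by linarith
        then show ?thesis unfolding e'_def by simp
      qed
      finally show ?thesis by (simp add: algebra_simps)
    qed
    ultimately show ?case by simp
  qed
qed

lemma has_cderiv_add:
  "has_cderiv smul P f z d1 \<Longrightarrow> has_cderiv smul P g z d2 \<Longrightarrow>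
    has_cderiv smul P (\<lambda>w. f w + g w) z (d1 + d2)"
  using has_cderiv_lincomb[of f z d1 g d2 1 1] by simp

lemma has_cderiv_const: "has_cderiv smul P (\<lambda>w. c) z 0"
  unfolding has_cderiv_iff by (simp add: p_zero)

lemma has_cderiv_sum:
  assumes "finite A" "\<And>i. i \<in> A \<Longrightarrow> has_cderiv smul P (f i) z (d i)"
  shows "has_cderiv smul P (\<lambda>w. \<Sum>i\<in>A. f i w) z (\<Sum>i\<in>A. d i)"
  using assms
proof (induction A rule: finite_induct)
  case empty then show ?case using has_cderiv_const[of 0 z] by simp
next
  case (insert a A)
  then show ?case using has_cderiv_add[of "f a" z "d a" "\<lambda>w. \<Sum>i\<in>A. f i w" "\<Sum>i\<in>A. d i"] by simp
qed

lemma has_cderiv_scalar: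
  assumes "(u has_field_derivative u') (at z)"
  shows "has_cderiv smul P (\<lambda>w. smul (u w) x) z (smul u' x)"
  unfolding has_cderiv_iff
proof (intro ballI allI impI)
  fix p and e :: real assume pP: "p \<in> P" and e: "e > 0"
  have "((\<lambda>h. (u (z + h) - u z) / h) \<longlongrightarrow> u') (at 0)" using assms unfolding DERIV_def .
  then have "eventually (\<lambda>h. dist ((u (z + h) - u z) / h) u' < e / (p x + 1)) (at 0)"
    using e p_nonneg[OF pP, of x] by (intro tendstoD) (auto simp: add_nonneg_pos)
  then show "eventually (\<lambda>h. p (smul (inverse h) (smul (u (z + h)) x - smul (u z) x) - smul u' x) < e) (at 0)"
  proof eventually_elim
    case (elim h)
    have "smul (inverse h) (smul (u (z + h)) x - smul (u z) x) - smul u' x = smul ((u (z + h) - u z) / h - u') x"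
      by (simp add: scale_right_diff_distrib divide_inverse algebra_simps)
    then have "p (smul (inverse h) (smul (u (z + h)) x - smul (u z) x) - smul u' x) =
        dist ((u (z + h) - u z) / h) u' * p x"
      by (simp add: p_smul[OF pP] dist_norm)
    also have "\<dots> \<le> e / (p x + 1) * p x" using elim p_nonneg[OF pP, of x] by (intro mult_right_mono) auto
    also have "\<dots> < e" using e p_nonneg[OF pP, of x] by (simp add: field_simps)
    finally show ?case .
  qed
qed

lemma has_cderiv_transform:
  assumes "has_cderiv smul P f z d" "open D" "z \<in> D" "\<And>w. w \<in> D \<Longrightarrow> f w = g w"
  shows "has_cderiv smul P g z d"
  unfolding has_cderiv_iff
proof (intro ballI allI impI)
  fix p and e :: real assume "p \<in> P" "e > 0"
  then have "eventually (\<lambda>h. p (smul (inverse h) (f (z + h) - f z) - d) < e) (at 0)"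
    using assms(1) unfolding has_cderiv_iff by blast
  with eventually_at0_in_open[OF assms(2,3)]
  show "eventually (\<lambda>h. p (smul (inverse h) (g (z + h) - g z) - d) < e) (at 0)"
    by eventually_elim (use assms(3,4) in auto)
qed

end



lemma cauchy_bound:
  fixes \<psi> :: "complex \<Rightarrow> complex"
  assumes "\<psi> holomorphic_on D" "open D" "cball w r \<subseteq> D" "r > 0"
    and "\<And>\<zeta>. \<zeta> \<in> cball w r \<Longrightarrow> cmod (\<psi> \<zeta>) \<le> M"
  shows "cmod ((deriv ^^ n) \<psi> w) \<le> fact n * M / r ^ n"
proof (rule Cauchy_inequality)
  show "\<psi> holomorphic_on ball w r" by (rule holomorphic_on_subset[OF assms(1) subset_trans[OF ball_subset_cball assms(3)]])
  show "continuous_on (cball w r) \<psi>"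
    by (rule holomorphic_on_imp_continuous_on[OF holomorphic_on_subset[OF assms(1,3)]])
  show "0 < r" by fact
  show "cmod (\<psi> x) \<le> M" if "cmod (w - x) = r" for x
    using assms(5) that by (simp add: dist_norm)
qed

lemma chi_estimates:
  fixes \<psi> :: "complex \<Rightarrow> complex"
  assumes hol: "\<psi> holomorphic_on D" and D: "open D" and sub: "cball z R \<subseteq> D" and R: "R > 0"
    and M: "\<And>\<zeta>. \<zeta> \<in> cball z R \<Longrightarrow> cmod (\<psi> \<zeta>) \<le> M"
  defines "chi \<equiv> \<lambda>h. (deriv \<psi> (z + h) - deriv \<psi> z) / h"
  shows "\<And>h. h \<noteq> 0 \<Longrightarrow> cmod h \<le> R / 2 \<Longrightarrow> cmod (chi h) \<le> 7 * M / R^2"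
    and "\<And>h k. h \<noteq> 0 \<Longrightarrow> cmod h \<le> R / 2 \<Longrightarrow> k \<noteq> 0 \<Longrightarrow> cmod k \<le> R / 2 \<Longrightarrow>
           cmod (chi h - chi k) \<le> 28 * M / R^3 * cmod (h - k)"
proof -
  have "cmod (\<psi> z) \<le> M" using M R by simp
  then have M0: "M \<ge> 0" by (rule order_trans[OF norm_ge_zero])
  define \<psi>' where "\<psi>' = deriv \<psi>"
  have hol': "\<psi>' holomorphic_on D" unfolding \<psi>'_def using hol D by (rule holomorphic_deriv)
  have bd1: "cmod (\<psi>' w) \<le> M / r" if "cball w r \<subseteq> cball z R" "r > 0" for w r
  proof -
    have "cball w r \<subseteq> D" using that(1) sub by (rule subset_trans)
    then have "cmod ((deriv ^^ 1) \<psi> w) \<le> fact 1 * M / r ^ 1"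
      by (rule cauchy_bound[OF hol D _ that(2)]) (use that(1) M in auto)
    then show ?thesis unfolding \<psi>'_def by simp
  qed
  have bz: "cmod (\<psi>' z) \<le> M / R" using bd1[of z R] R by simp
  define chiz where "chiz = (\<lambda>w. if w = z then deriv \<psi>' z else (\<psi>' w - \<psi>' z) / (w - z))"
  have zin: "z \<in> interior D" using sub R D by (simp add: interior_open subset_iff)
  have hol0: "chiz holomorphic_on D" unfolding chiz_def by (rule pole_lemma[OF hol' zin])
  have sub34: "cball z (3 * R / 4) \<subseteq> D" using R by (intro subset_trans[OF subset_cball sub]) simp
  have fr: "cmod (chiz \<zeta>) \<le> 7 * M / R^2" if "\<zeta> \<in> frontier (cball z (3 * R / 4))" for \<zeta>
  proof -
    have d: "dist z \<zeta> = 3 * R / 4" using that R by (simp add: sphere_def)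
    then have ne: "\<zeta> \<noteq> z" using R by auto
    have "cball \<zeta> (R / 4) \<subseteq> cball z R"
      using d R by (intro cball_subset_cball_iff[THEN iffD2]) (simp add: dist_commute)
    then have b\<zeta>: "cmod (\<psi>' \<zeta>) \<le> M / (R / 4)" using bd1[of \<zeta> "R / 4"] R by simp
    have nz: "cmod (\<zeta> - z) = 3 * R / 4" using d by (simp add: dist_norm norm_minus_commute)
    have "cmod (chiz \<zeta>) = cmod (\<psi>' \<zeta> - \<psi>' z) / cmod (\<zeta> - z)"
      using ne unfolding chiz_def by (simp add: norm_divide)
    also have "\<dots> = cmod (\<psi>' \<zeta> - \<psi>' z) / (3 * R / 4)" by (simp only: nz)
    finally have "cmod (chiz \<zeta>) = cmod (\<psi>' \<zeta> - \<psi>' z) / (3 * R / 4)" .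
    also have "\<dots> \<le> (M / (R / 4) + M / R) / (3 * R / 4)"
      using b\<zeta> bz R norm_triangle_ineq4[of "\<psi>' \<zeta>" "\<psi>' z"] by (intro divide_right_mono) auto
    also have "\<dots> = 20 * M / (3 * R^2)" using R by (simp add: field_simps power2_eq_square)
    also have "\<dots> \<le> 7 * M / R^2" using R M0 by (simp add: field_simps power2_eq_square)
    finally show ?thesis .
  qed
  have b0: "cmod (chiz w) \<le> 7 * M / R^2" if "w \<in> cball z (3 * R / 4)" for w
  proof (rule maximum_modulus_frontier[where f = chiz and S = "cball z (3 * R / 4)" and \<xi> = w and B = "7 * M / R^2"])
    show "chiz holomorphic_on interior (cball z (3 * R / 4))"
      by (rule holomorphic_on_subset[OF hol0 subset_trans[OF interior_subset sub34]])
    show "continuous_on (closure (cball z (3 * R / 4))) chiz"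
      using hol0 sub34 D by (simp add: holomorphic_on_imp_continuous_on holomorphic_on_subset)
  qed (use fr that in auto)
  have bd': "cmod (deriv chiz w) \<le> 28 * M / R^3" if "w \<in> cball z (R / 2)" for w
  proof -
    have "cball w (R / 4) \<subseteq> cball z (3 * R / 4)"
      using that by (intro cball_subset_cball_iff[THEN iffD2]) (simp add: dist_commute)
    then have "cmod ((deriv ^^ 1) chiz w) \<le> fact 1 * (7 * M / R^2) / (R / 4) ^ 1"
      using sub34 R b0 by (intro cauchy_bound[OF hol0 D]) auto
    also have "\<dots> = 28 * M / R^3" using R by (simp add: field_simps power2_eq_square power3_eq_cube)
    finally show ?thesis by simp
  qed
  have sub2: "cball z (R / 2) \<subseteq> D" using R by (intro subset_trans[OF subset_cball sub]) simp
  have lip: "cmod (chiz w1 - chiz w2) \<le> 28 * M / R^3 * cmod (w1 - w2)"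
    if "w1 \<in> cball z (R / 2)" "w2 \<in> cball z (R / 2)" for w1 w2
  proof (rule field_differentiable_bound[OF convex_cball _ bd' that])
    fix w assume "w \<in> cball z (R / 2)"
    then have "w \<in> D" using sub2 by blast
    then have fd: "chiz field_differentiable at w" using holomorphic_on_imp_differentiable_at[OF hol0 D] by simp
    show "(chiz has_field_derivative deriv chiz w) (at w within cball z (R / 2))"
      using DERIV_deriv_iff_field_differentiable[THEN iffD2, OF fd] by (rule has_field_derivative_at_within)
  qed
  have chi_eq: "chi h = chiz (z + h)" if "h \<noteq> 0" for h
    using that unfolding chi_def chiz_def \<psi>'_def by simp
  have inb: "z + h \<in> cball z (R / 2)" if "cmod h \<le> R / 2" for h
    using that by (simp add: dist_norm)
  show "cmod (chi h) \<le> 7 * M / R^2" if "h \<noteq> 0" "cmod h \<le> R / 2" for h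
    using b0[of "z + h"] inb[OF that(2)] chi_eq[OF that(1)] R by (simp add: dist_norm)
  show "cmod (chi h - chi k) \<le> 28 * M / R^3 * cmod (h - k)"
    if "h \<noteq> 0" "cmod h \<le> R / 2" "k \<noteq> 0" "cmod k \<le> R / 2" for h k
    using lip[OF inb[OF that(2)] inb[OF that(4)]] chi_eq[OF that(1)] chi_eq[OF that(3)] by simp
qed

lemma taylor_remainder:
  fixes \<psi> :: "complex \<Rightarrow> complex"
  assumes hol: "\<psi> holomorphic_on D" and D: "open D" and sub: "cball z0 \<rho> \<subseteq> D"
    and M: "\<And>\<zeta>. \<zeta> \<in> cball z0 \<rho> \<Longrightarrow> cmod (\<psi> \<zeta>) \<le> M"
    and s: "0 \<le> s" "s < \<rho>" and w: "cmod (w - z0) \<le> s"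
  shows "cmod (\<psi> w - (\<Sum>n\<le>k. (deriv ^^ n) \<psi> z0 / fact n * (w - z0) ^ n)) \<le> M * (s / \<rho>) ^ Suc k / (1 - s / \<rho>)"
proof -
  have \<rho>: "\<rho> > 0" using s by simp
  define q where "q = s / \<rho>"
  have q: "0 \<le> q" "q < 1" unfolding q_def using s \<rho> by auto
  define a where "a n = (deriv ^^ n) \<psi> z0 / fact n * (w - z0) ^ n" for n
  have sums: "a sums \<psi> w" unfolding a_def
  proof (rule holomorphic_power_series)
    show "\<psi> holomorphic_on ball z0 \<rho>" by (rule holomorphic_on_subset[OF hol subset_trans[OF ball_subset_cball sub]])
    show "w \<in> ball z0 \<rho>" using w s by (simp add: dist_norm norm_minus_commute)
  qed
  have "cmod (\<psi> z0) \<le> M" using M \<rho> by simp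
  then have M0: "M \<ge> 0" by (rule order_trans[OF norm_ge_zero])
  have abound: "cmod (a n) \<le> M * q ^ n" for n
  proof -
    have "cmod ((deriv ^^ n) \<psi> z0) \<le> fact n * M / \<rho> ^ n"
      by (rule cauchy_bound[OF hol D sub \<rho> M])
    then have "cmod ((deriv ^^ n) \<psi> z0 / fact n) \<le> M / \<rho> ^ n"
      by (simp add: norm_divide field_simps)
    moreover have "cmod ((w - z0) ^ n) \<le> s ^ n" using w by (simp add: norm_power power_mono)
    ultimately have "cmod (a n) \<le> M / \<rho> ^ n * s ^ n"
      unfolding a_def norm_mult using M0 \<rho> by (intro mult_mono) auto
    also have "\<dots> = M * q ^ n" unfolding q_def by (simp add: power_divide)
    finally show ?thesis .
  qed
  have summ: "summable a" using sums by (rule sums_summable)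
  have "\<psi> w = (\<Sum>n. a (n + Suc k)) + (\<Sum>i<Suc k. a i)"
    using suminf_split_initial_segment[OF summ, of "Suc k"] sums_unique[OF sums] by simp
  then have eq: "\<psi> w - (\<Sum>n\<le>k. a n) = (\<Sum>n. a (n + Suc k))"
    by (simp add: lessThan_Suc_atMost)
  have gs: "summable (\<lambda>n. M * q ^ (n + Suc k))"
    using q by (simp add: power_add summable_mult2 summable_geometric)
  have "cmod (\<Sum>n. a (n + Suc k)) \<le> (\<Sum>n. M * q ^ (n + Suc k))"
    by (rule norm_suminf_le[OF _ gs]) (rule abound)
  also have "(\<Sum>n. M * q ^ (n + Suc k)) = M * q ^ Suc k * (\<Sum>n. q ^ n)"
  proof -
    have "(\<lambda>n. M * q ^ (n + Suc k)) = (\<lambda>n. (M * q ^ Suc k) * q ^ n)"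
      by (rule ext) (simp only: power_add mult_ac)
    then show ?thesis using suminf_mult[OF summable_geometric[of q], of "M * q ^ Suc k"] q by simp
  qed
  also have "\<dots> = M * q ^ Suc k / (1 - q)" using q by (simp add: suminf_geometric)
  finally show ?thesis using eq unfolding a_def q_def by simp
qed




context lcs
begin

lemma Hol_bdd:
  assumes "Hol g D" "open D" "compact K" "K \<subseteq> D" "p \<in> P"
  shows "bdd_above ((\<lambda>\<zeta>. p (g \<zeta> - c)) ` K)"
proof -
  have "continuous_on K (\<lambda>\<zeta>. p (g \<zeta> - c))"
  proof (rule continuous_at_imp_continuous_on, rule ballI)
    fix \<zeta> assume "\<zeta> \<in> K"
    then have "\<zeta> \<in> D" using assms(4) by blast
    then show "isCont (\<lambda>\<zeta>. p (g \<zeta> - c)) \<zeta>"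
      using has_cderiv_isCont[OF Hol_cderiv[OF assms(1)] assms(5)] by simp
  qed
  then have "compact ((\<lambda>\<zeta>. p (g \<zeta> - c)) ` K)" using assms(3) by (rule compact_continuous_image)
  then show ?thesis by (intro bounded_imp_bdd_above compact_imp_bounded)
qed

lemma in_scaled: "t \<noteq> 0 \<Longrightarrow> smul (of_real (1 / t)) v \<in> B \<Longrightarrow> v \<in> smul (of_real t) ` B"
  by (rule image_eqI[of _ _ "smul (of_real (1 / t)) v"]) simp_all

lemma gauge_le: "t > 0 \<Longrightarrow> x \<in> smul (of_real t) ` B \<Longrightarrow> gauge smul B x \<le> t"
  unfolding gauge_def by (rule cInf_lower) (auto intro!: bdd_belowI[of _ 0])

lemma p_le_gauge:
  assumes pP: "p \<in> P" and K: "K \<ge> 0" and pb: "\<And>b. b \<in> B \<Longrightarrow> p b \<le> K"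
    and t0: "t0 > 0" "x \<in> smul (of_real t0) ` B"
  shows "p x \<le> K * gauge smul B x"
proof (cases "K = 0")
  case True
  then have "p x \<le> 0" using t0(2) pb p_smul[OF pP] t0(1) by (auto simp: mult_le_0_iff)
  then show ?thesis using True by simp
next
  case False
  then have Kp: "K > 0" using K by simp
  have "p x / K \<le> gauge smul B x"
    unfolding gauge_def
  proof (rule cInf_greatest)
    show "{t. t > 0 \<and> x \<in> smul (of_real t) ` B} \<noteq> {}" using t0 by blast
    fix t assume "t \<in> {t. t > 0 \<and> x \<in> smul (of_real t) ` B}"
    then obtain b where "t > 0" "b \<in> B" "x = smul (of_real t) b" by blast
    then have "p x = t * p b" by (simp add: p_smul[OF pP])
    also have "\<dots> \<le> t * K" using pb[OF \<open>b \<in> B\<close>] \<open>t > 0\<close> by simp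
    finally show "p x / K \<le> t" using Kp by (simp add: field_simps)
  qed
  then show ?thesis using Kp by (simp add: field_simps)
qed

end

locale lcs_lc = lcs +
  assumes lc: "locally_complete smul P"
begin

lemma deriv_step:
  assumes D: "open D" and hol: "Hol g D" and R: "R > 0" and sub: "cball z R \<subseteq> D"
  shows "\<exists>d. has_cderiv smul P (cderiv smul P g) z d"
proof -
  define G where "G = cderiv smul P g"
  define N where "N p = (SUP \<zeta>\<in>cball z R. p (g \<zeta>))" for p :: "'a \<Rightarrow> real"
  have Nub: "p (g \<zeta>) \<le> N p" if "p \<in> P" "\<zeta> \<in> cball z R" for p \<zeta>
  proof -
    have "bdd_above ((\<lambda>\<zeta>. p (g \<zeta> - 0)) ` cball z R)"
      by (rule Hol_bdd[OF hol D compact_cball sub that(1)])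
    then have "bdd_above ((\<lambda>\<zeta>. p (g \<zeta>)) ` cball z R)" by simp
    then show ?thesis unfolding N_def using that(2) by (rule cSUP_upper2) simp
  qed
  have N0: "N p \<ge> 0" if "p \<in> P" for p
    using Nub[OF that, of z] p_nonneg[OF that, of "g z"] R by simp
  define C where "C = 28 / R^3 + 7 / R^2"
  have C0: "C > 0" unfolding C_def using R by (intro add_pos_pos divide_pos_pos) auto
  define B where "B = {x. \<forall>p\<in>P. \<forall>\<phi>. dual p \<phi> \<longrightarrow> cmod (\<phi> x) \<le> C * N p}"
  define q where "q h = smul (inverse h) (G (z + h) - G z)" for h
  define chi where "chi \<psi> h = (deriv \<psi> (z + h) - deriv \<psi> z) / h" for \<psi> :: "complex \<Rightarrow> complex" and h
  have scal: "cmod (\<phi> (q h)) \<le> 7 * N p / R^2"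
      "cmod (\<phi> (q h) - \<phi> (q k)) \<le> 28 * N p / R^3 * cmod (h - k)"
    if pP: "p \<in> P" and dp: "dual p \<phi>" and h: "h \<noteq> 0" "cmod h \<le> R / 2"
      and k: "k \<noteq> 0" "cmod k \<le> R / 2" for p \<phi> h k
  proof -
    let ?\<psi> = "\<lambda>w. \<phi> (g w)"
    have holp: "?\<psi> holomorphic_on D" by (rule dual_holo(1)[OF pP dp hol D])
    have dp': "deriv ?\<psi> w = \<phi> (G w)" if "w \<in> D" for w
      unfolding G_def by (rule dual_holo(2)[OF pP dp hol D that])
    have Mb: "cmod (?\<psi> \<zeta>) \<le> N p" if "\<zeta> \<in> cball z R" for \<zeta>
      using dual_bound[OF dp, of "g \<zeta>"] Nub[OF pP that] by simp
    have lf: "lin_fun smul \<phi>" by (rule dual_lin[OF dp])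
    have qe: "\<phi> (q h) = chi ?\<psi> h" if "cmod h \<le> R / 2" for h
    proof -
      have "z + h \<in> D" using that sub R by (auto simp: dist_norm subset_iff)
      moreover have "z \<in> D" using sub R by auto
      ultimately show ?thesis unfolding q_def chi_def
        by (simp add: lin_fun_smul[OF lf] lin_fun_diff[OF lf] dp' divide_inverse mult.commute)
    qed
    have c1: "cmod (chi ?\<psi> h) \<le> 7 * N p / R^2" unfolding chi_def
      by (rule chi_estimates(1)[OF holp D sub R]) (use Mb h in auto)
    have c2: "cmod (chi ?\<psi> h - chi ?\<psi> k) \<le> 28 * N p / R^3 * cmod (h - k)" unfolding chi_def
      by (rule chi_estimates(2)[OF holp D sub R]) (use Mb h k in auto)
    show "cmod (\<phi> (q h)) \<le> 7 * N p / R^2" using c1 qe[OF h(2)] by simp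
    show "cmod (\<phi> (q h) - \<phi> (q k)) \<le> 28 * N p / R^3 * cmod (h - k)"
      using c2 qe[OF h(2)] qe[OF k(2)] by simp
  qed
  have pB: "p b \<le> C * N p" if pb: "p \<in> P" "b \<in> B" for p b
  proof -
    obtain \<phi> where "dual p \<phi>" "cmod (\<phi> b) = p b" using p_attained[OF pb(1)] by blast
    then show ?thesis using pb unfolding B_def by force
  qed
  have Bclosed: "closedin (sn_topology P) B"
    unfolding closedin_def sn_topology_def pm_topspace
  proof (intro conjI)
    show "B \<subseteq> UNIV" by simp
    show "openin (pm_topology UNIV ((\<lambda>p x y. p (x - y)) ` P)) (UNIV - B)"
      unfolding pm_openin
    proof (intro conjI ballI)
      show "UNIV - B \<subseteq> UNIV" by simp
      fix x assume "x \<in> UNIV - B"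
      then obtain p \<phi> where pP: "p \<in> P" and dp: "dual p \<phi>" and gt: "cmod (\<phi> x) > C * N p"
        unfolding B_def by force
      define e where "e = cmod (\<phi> x) - C * N p"
      have e: "e > 0" unfolding e_def using gt by simp
      have "{y \<in> UNIV. \<forall>d\<in>{\<lambda>x y. p (x - y)}. d x y < e} \<subseteq> UNIV - B"
      proof
        fix y assume "y \<in> {y \<in> UNIV. \<forall>d\<in>{\<lambda>x y. p (x - y)}. d x y < e}"
        then have py: "p (x - y) < e" by simp
        have "cmod (\<phi> x) \<le> cmod (\<phi> y) + cmod (\<phi> x - \<phi> y)"
          by (metis add.commute diff_add_cancel norm_triangle_ineq)
        also have "\<phi> x - \<phi> y = \<phi> (x - y)" by (rule lin_fun_diff[OF dual_lin[OF dp], symmetric])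
        also have "cmod (\<phi> (x - y)) \<le> p (x - y)" by (rule dual_bound[OF dp])
        finally have "cmod (\<phi> y) > C * N p" using py unfolding e_def by simp
        then show "y \<in> UNIV - B" using pP dp unfolding B_def by force
      qed
      moreover have "{\<lambda>x y. p (x - y)} \<subseteq> (\<lambda>p x y. p (x - y)) ` P" using pP by blast
      ultimately show "\<exists>F e. finite F \<and> F \<subseteq> (\<lambda>p x y. p (x - y)) ` P \<and> e > 0 \<and>
           {y \<in> UNIV. \<forall>d\<in>F. d x y < e} \<subseteq> UNIV - B"
        using e by (intro exI[of _ "{\<lambda>x y. p (x - y)}"] exI[of _ e]) simp
    qed
  qed
  have Bbdd: "lc_bounded P B"
    unfolding lc_bounded_def
  proof
    fix p assume "p \<in> P"
    then show "bdd_above (p ` B)" using pB by (intro bdd_aboveI[of _ "C * N p"]) blast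
  qed
  have Bconv: "abs_convex smul B"
    unfolding abs_convex_def
  proof (intro ballI allI impI)
    fix x y a b assume x: "x \<in> B" and y: "y \<in> B" and ab: "cmod a + cmod b \<le> 1"
    show "smul a x + smul b y \<in> B"
      unfolding B_def
    proof (intro CollectI ballI allI impI)
      fix p \<phi> assume pP: "p \<in> P" and dp: "dual p \<phi>"
      have lf: "lin_fun smul \<phi>" by (rule dual_lin[OF dp])
      have "cmod (\<phi> (smul a x + smul b y)) = cmod (a * \<phi> x + b * \<phi> y)"
        using lf unfolding lin_fun_def by simp
      also have "\<dots> \<le> cmod a * cmod (\<phi> x) + cmod b * cmod (\<phi> y)"
        by (metis norm_mult norm_triangle_ineq)
      also have "\<dots> \<le> cmod a * (C * N p) + cmod b * (C * N p)"
        using x y pP dp unfolding B_def by (intro add_mono mult_left_mono) auto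
      also have "\<dots> = (cmod a + cmod b) * (C * N p)" by (simp add: algebra_simps)
      also have "\<dots> \<le> 1 * (C * N p)" using ab C0 N0[OF pP] by (intro mult_right_mono) auto
      finally show "cmod (\<phi> (smul a x + smul b y)) \<le> C * N p" by simp
    qed
  qed
  have bg: "banach_gauge smul B" using lc Bclosed Bbdd Bconv unfolding locally_complete_def by blast
  have qB: "q h \<in> B" if "h \<noteq> 0" "cmod h \<le> R / 2" for h
    unfolding B_def
  proof (intro CollectI ballI allI impI)
    fix p \<phi> assume pP: "p \<in> P" and dp: "dual p \<phi>"
    have "cmod (\<phi> (q h)) \<le> 7 * N p / R^2" using scal(1)[OF pP dp that that] .
    also have "\<dots> \<le> C * N p" unfolding C_def using N0[OF pP] R by (simp add: field_simps)
    finally show "cmod (\<phi> (q h)) \<le> C * N p" .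
  qed
  have qdiff: "q h - q k \<in> smul (of_real t) ` B"
    if "h \<noteq> 0" "cmod h \<le> R / 2" "k \<noteq> 0" "cmod k \<le> R / 2" "t > 0" "cmod (h - k) \<le> t" for h k t
  proof (rule in_scaled)
    show "t \<noteq> 0" using that by simp
    show "smul (of_real (1 / t)) (q h - q k) \<in> B"
      unfolding B_def
    proof (intro CollectI ballI allI impI)
      fix p \<phi> assume pP: "p \<in> P" and dp: "dual p \<phi>"
      have lf: "lin_fun smul \<phi>" by (rule dual_lin[OF dp])
      have "cmod (\<phi> (smul (of_real (1 / t)) (q h - q k))) = cmod (\<phi> (q h) - \<phi> (q k)) / t"
        using that(5) by (simp add: lin_fun_smul[OF lf] lin_fun_diff[OF lf] norm_mult norm_divide)
      also have "\<dots> \<le> 28 * N p / R^3 * cmod (h - k) / t"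
        by (rule divide_right_mono[OF scal(2)[OF pP dp that(1-4)]]) (use that(5) in simp)
      also have "\<dots> \<le> 28 * N p / R^3 * t / t"
        using that(5,6) N0[OF pP] R by (intro divide_right_mono mult_left_mono) auto
      also have "\<dots> = 28 * N p / R^3" using that(5) by simp
      also have "\<dots> \<le> C * N p" unfolding C_def using N0[OF pP] R by (simp add: field_simps)
      finally show "cmod (\<phi> (smul (of_real (1 / t)) (q h - q k))) \<le> C * N p" .
    qed
  qed
  have plip: "p (q h - q k) \<le> 28 * N p / R^3 * cmod (h - k)"
    if hk: "p \<in> P" "h \<noteq> 0" "cmod h \<le> R / 2" "k \<noteq> 0" "cmod k \<le> R / 2" for p h k
  proof -
    obtain \<phi> where dp: "dual p \<phi>" and eq: "cmod (\<phi> (q h - q k)) = p (q h - q k)"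
      using p_attained[OF hk(1)] by blast
    have "\<phi> (q h - q k) = \<phi> (q h) - \<phi> (q k)" by (rule lin_fun_diff[OF dual_lin[OF dp]])
    then show ?thesis using scal(2)[OF hk(1) dp hk(2-5)] eq by simp
  qed
  define r where "r n = R / (2 * (real n + 1))" for n
  have r: "r n > 0" "r n \<le> R / 2" for n
  proof -
    show "r n > 0" unfolding r_def using R by simp
    have "R / (2 * (real n + 1)) \<le> R / (2 * 1)" using R by (intro divide_left_mono) auto
    then show "r n \<le> R / 2" unfolding r_def by simp
  qed
  define hs where "hs n = complex_of_real (r n)" for n
  have hs: "hs n \<noteq> 0" "cmod (hs n) \<le> R / 2" "cmod (hs n) = R / (2 * (real n + 1))" for n
  proof -
    show "hs n \<noteq> 0" unfolding hs_def using r(1)[of n] by simp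
    have "cmod (hs n) = r n" unfolding hs_def norm_of_real using r(1)[of n] by simp
    then show "cmod (hs n) \<le> R / 2" "cmod (hs n) = R / (2 * (real n + 1))" using r(2)[of n] unfolding r_def by auto
  qed
  define xs where "xs n = q (hs n)" for n
  have xs_span: "xs n \<in> span_set smul B" for n
    unfolding span_set_def xs_def using qB[OF hs(1,2)] by (intro CollectI exI[of _ 1] bexI[of _ "q (hs n)"]) auto
  have cauchy: "\<forall>e>0. \<exists>M. \<forall>m\<ge>M. \<forall>n\<ge>M. gauge smul B (xs m - xs n) < e"
  proof (intro allI impI)
    fix e :: real assume e: "e > 0"
    obtain M :: nat where M: "real M > R / e" using reals_Archimedean2 by blast
    have RM: "R / (2 * (real M + 1)) < e / 2"
    proof -
      have "R < e * (real M + 1)" using M e by (simp add: field_simps)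
      then show ?thesis using e by (simp add: field_simps)
    qed
    have "gauge smul B (xs m - xs n) < e" if "m \<ge> M" "n \<ge> M" for m n
    proof -
      have mono: "R / (2 * (real k + 1)) \<le> R / (2 * (real M + 1))" if "k \<ge> M" for k
        using that R by (intro divide_left_mono) auto
      have "cmod (hs m - hs n) \<le> max (cmod (hs m)) (cmod (hs n))"
      proof -
        have "cmod (hs m - hs n) = \<bar>r m - r n\<bar>" unfolding hs_def of_real_diff[symmetric] norm_of_real ..
        also have "\<dots> \<le> max \<bar>r m\<bar> \<bar>r n\<bar>" using r(1)[of m] r(1)[of n] by linarith
        also have "\<dots> = max (cmod (hs m)) (cmod (hs n))" unfolding hs_def norm_of_real ..
        finally show ?thesis .
      qed
      also have "\<dots> \<le> R / (2 * (real M + 1))" unfolding hs(3) using mono[OF that(1)] mono[OF that(2)] by (rule max.boundedI)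
      also have "\<dots> \<le> e / 2" using RM by simp
      finally have "xs m - xs n \<in> smul (of_real (e / 2)) ` B"
        unfolding xs_def using e by (intro qdiff hs) auto
      then have "gauge smul B (xs m - xs n) \<le> e / 2" using e by (intro gauge_le) auto
      then show ?thesis using e by simp
    qed
    then show "\<exists>M. \<forall>m\<ge>M. \<forall>n\<ge>M. gauge smul B (xs m - xs n) < e" by blast
  qed
  obtain y where y: "y \<in> span_set smul B" and gy: "(\<lambda>n. gauge smul B (xs n - y)) \<longlonglongrightarrow> 0"
    using bg xs_span cauchy unfolding banach_gauge_def by blast
  obtain m b where b: "b \<in> B" and ym: "y = smul (of_nat m) b" using y unfolding span_set_def by blast
  have vin: "xs n - y \<in> smul (of_real (real m + 1)) ` B" for n
  proof (rule in_scaled)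
    show "real m + 1 \<noteq> 0" by simp
    show "smul (of_real (1 / (real m + 1))) (xs n - y) \<in> B"
      unfolding B_def
    proof (intro CollectI ballI allI impI)
      fix p \<phi> assume pP: "p \<in> P" and dp: "dual p \<phi>"
      have lf: "lin_fun smul \<phi>" by (rule dual_lin[OF dp])
      have bx: "cmod (\<phi> (xs n)) \<le> C * N p" using qB[OF hs(1,2)] pP dp unfolding B_def xs_def by blast
      have bb: "cmod (\<phi> b) \<le> C * N p" using b pP dp unfolding B_def by blast
      have nm: "cmod (complex_of_nat m + 1) = real m + 1"
      proof -
        have "complex_of_nat m + 1 = of_nat (Suc m)" by simp
        then show ?thesis by (simp only: norm_of_nat)
      qed
      have "cmod (\<phi> (smul (of_real (1 / (real m + 1))) (xs n - y))) =
          cmod (\<phi> (xs n) - of_nat m * \<phi> b) / (real m + 1)"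
        unfolding ym using nm by (simp add: lin_fun_smul[OF lf] lin_fun_diff[OF lf] norm_mult norm_divide)
      also have "\<dots> \<le> (cmod (\<phi> (xs n)) + real m * cmod (\<phi> b)) / (real m + 1)"
        by (intro divide_right_mono) (auto intro: order_trans[OF norm_triangle_ineq4] simp: norm_mult)
      also have "\<dots> \<le> (C * N p + real m * (C * N p)) / (real m + 1)"
        using bx bb by (intro divide_right_mono add_mono mult_left_mono) auto
      also have "\<dots> = C * N p" by (simp add: field_simps)
      finally show "cmod (\<phi> (smul (of_real (1 / (real m + 1))) (xs n - y))) \<le> C * N p" .
    qed
  qed
  have pconv: "(\<lambda>n. p (xs n - y)) \<longlonglongrightarrow> 0" if pP: "p \<in> P" for p
  proof (rule tendsto_sandwich[of "\<lambda>n. 0" _ _ "\<lambda>n. C * N p * gauge smul B (xs n - y)"])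
    show "eventually (\<lambda>n. 0 \<le> p (xs n - y)) sequentially" using p_nonneg[OF pP] by simp
    show "eventually (\<lambda>n. p (xs n - y) \<le> C * N p * gauge smul B (xs n - y)) sequentially"
      using p_le_gauge[OF pP _ pB[OF pP] _ vin] C0 N0[OF pP] by simp
    show "(\<lambda>n. C * N p * gauge smul B (xs n - y)) \<longlonglongrightarrow> 0"
      using tendsto_mult_right_zero[OF gy] by simp
  qed simp
  have hs0: "hs \<longlonglongrightarrow> 0"
  proof -
    have "(\<lambda>n. R / 2 * inverse (real n + 1)) \<longlonglongrightarrow> R / 2 * 0"
      by (intro tendsto_mult tendsto_const) (use LIMSEQ_inverse_real_of_nat in \<open>simp add: add.commute\<close>)
    then have lim: "(\<lambda>n. R / 2 * inverse (real n + 1)) \<longlonglongrightarrow> 0" by simp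
    have eq: "r = (\<lambda>n. R / 2 * inverse (real n + 1))" unfolding r_def by (rule ext) (simp add: field_simps)
    have "r \<longlonglongrightarrow> 0" unfolding eq by (rule lim)
    then have "(\<lambda>n. of_real (r n) :: complex) \<longlonglongrightarrow> of_real 0"
      by (intro tendsto_of_real)
    then show ?thesis unfolding hs_def by simp
  qed
  have key: "p (q h - y) \<le> 28 * N p / R^3 * cmod h" if pP: "p \<in> P" and h: "h \<noteq> 0" "cmod h \<le> R / 2" for p h
  proof (rule field_le_epsilon)
    fix \<epsilon> :: real assume \<epsilon>: "\<epsilon> > 0"
    define K where "K = 28 * N p / R^3"
    have K0: "K \<ge> 0" unfolding K_def using N0[OF pP] R by simp
    have "eventually (\<lambda>n. p (xs n - y) < \<epsilon> / 2) sequentially"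
      using pconv[OF pP] \<epsilon> by (intro order_tendstoD) auto
    moreover have "eventually (\<lambda>n. cmod (hs n) < \<epsilon> / (2 * (K + 1))) sequentially"
    proof -
      have "(\<lambda>n. cmod (hs n)) \<longlonglongrightarrow> 0" using tendsto_norm[OF hs0] by simp
      then show ?thesis using \<epsilon> K0 by (intro order_tendstoD) auto
    qed
    ultimately obtain n where n1: "p (xs n - y) < \<epsilon> / 2" and n2: "cmod (hs n) < \<epsilon> / (2 * (K + 1))"
      using eventually_sequentially by (metis (no_types, lifting) eventually_conj_iff eventually_sequentially le_refl)
    have "p (q h - y) \<le> p (q h - q (hs n)) + p (q (hs n) - y)" by (rule p_diff_le[OF pP])
    also have "p (q h - q (hs n)) \<le> K * cmod (h - hs n)" unfolding K_def by (rule plip[OF pP h hs(1,2)])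
    also have "cmod (h - hs n) \<le> cmod h + cmod (hs n)" by (rule norm_triangle_ineq4)
    also have "p (q (hs n) - y) < \<epsilon> / 2" using n1 unfolding xs_def .
    finally have "p (q h - y) < K * (cmod h + cmod (hs n)) + \<epsilon> / 2"
      using K0 by (simp add: mult_left_mono)
    also have "K * cmod (hs n) \<le> \<epsilon> / 2"
    proof -
      have "K * cmod (hs n) \<le> (K + 1) * cmod (hs n)" by (simp add: algebra_simps)
      also have "\<dots> \<le> (K + 1) * (\<epsilon> / (2 * (K + 1)))" using n2 K0 by (intro mult_left_mono) auto
      also have "\<dots> = \<epsilon> / 2" using K0 by (simp add: field_simps)
      finally show ?thesis .
    qed
    then have "K * (cmod h + cmod (hs n)) + \<epsilon> / 2 \<le> K * cmod h + \<epsilon>" by (simp add: algebra_simps)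
    finally show "p (q h - y) \<le> 28 * N p / R^3 * cmod h + \<epsilon>" unfolding K_def by simp
  qed
  have "has_cderiv smul P G z y"
    unfolding has_cderiv_iff
  proof (intro ballI allI impI)
    fix p and e :: real assume pP: "p \<in> P" and e: "e > 0"
    define K where "K = 28 * N p / R^3"
    have K0: "K \<ge> 0" unfolding K_def using N0[OF pP] R by simp
    have "eventually (\<lambda>h::complex. cmod h < min (R / 2) (e / (K + 1))) (at 0)"
    proof -
      have "min (R / 2) (e / (K + 1)) > 0" using R e K0 by simp
      then show ?thesis unfolding eventually_at by (intro exI[of _ "min (R / 2) (e / (K + 1))"]) (auto simp: dist_norm)
    qed
    moreover have "eventually (\<lambda>h::complex. h \<noteq> 0) (at 0)" by (simp add: eventually_at_filter)
    ultimately show "eventually (\<lambda>h. p (smul (inverse h) (G (z + h) - G z) - y) < e) (at 0)"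
    proof eventually_elim
      case (elim h)
      have "p (q h - y) \<le> K * cmod h" unfolding K_def using key[OF pP elim(2)] elim(1) by simp
      also have "\<dots> \<le> (K + 1) * cmod h" by (simp add: distrib_right)
      also have "\<dots> < (K + 1) * (e / (K + 1))" using elim(1) K0 by (intro mult_strict_left_mono) auto
      also have "\<dots> = e" using K0 by simp
      finally show ?case unfolding q_def .
    qed
  qed
  then show ?thesis unfolding G_def by blast
qed

end



lemma disc_open: "open (disc z0 r)"
  unfolding open_dist
proof (intro ballI)
  fix z assume "z \<in> disc z0 r"
  then have "ereal (cmod (z - z0)) < r" unfolding disc_def by simp
  then obtain s where s0: "ereal (cmod (z - z0)) < ereal s" "ereal s < r" using ereal_dense2 by blast
  then have s: "cmod (z - z0) < s" "ereal s < r" by simp_all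
  show "\<exists>e>0. \<forall>y. dist y z < e \<longrightarrow> y \<in> disc z0 r"
  proof (intro exI[of _ "s - cmod (z - z0)"] conjI allI impI)
    show "s - cmod (z - z0) > 0" using s by simp
    fix y assume "dist y z < s - cmod (z - z0)"
    then have "cmod (y - z) < s - cmod (z - z0)" by (simp add: dist_norm)
    moreover have "cmod (y - z0) \<le> cmod (y - z) + cmod (z - z0)" using norm_triangle_ineq[of "y - z" "z - z0"] by simp
    ultimately have "cmod (y - z0) < s" by simp
    then have "ereal (cmod (y - z0)) < ereal s" by simp
    then have "ereal (cmod (y - z0)) < r" using s(2) by (rule less_trans)
    then show "y \<in> disc z0 r" unfolding disc_def by simp
  qed
qed

lemma centre_in_disc: "r > 0 \<Longrightarrow> z0 \<in> disc z0 r"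
  unfolding disc_def by (simp add: zero_ereal_def)

lemma cball_in_disc: "ereal \<rho> < r \<Longrightarrow> cball z0 \<rho> \<subseteq> disc z0 r"
proof
  fix x assume "ereal \<rho> < r" "x \<in> cball z0 \<rho>"
  then have "ereal (cmod (x - z0)) \<le> ereal \<rho>" by (simp add: dist_norm norm_minus_commute)
  then have "ereal (cmod (x - z0)) < r" using \<open>ereal \<rho> < r\<close> by (rule order_le_less_trans)
  then show "x \<in> disc z0 r" unfolding disc_def by simp
qed

lemma compact_in_disc:
  assumes "compact K" "K \<subseteq> disc z0 r" "r > 0"
  obtains s \<rho> where "0 \<le> s" "s < \<rho>" "ereal \<rho> < r" "K \<subseteq> cball z0 s"
proof -
  obtain s where s: "0 \<le> s" "ereal s < r" "K \<subseteq> cball z0 s"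
  proof (cases "K = {}")
    case True
    show ?thesis by (rule that[of 0]) (use True assms(3) in \<open>auto simp: zero_ereal_def\<close>)
  next
    case False
    have "continuous_on K (\<lambda>z. cmod (z - z0))" by (intro continuous_intros)
    then have "compact ((\<lambda>z. cmod (z - z0)) ` K)" using assms(1) by (rule compact_continuous_image)
    moreover have "(\<lambda>z. cmod (z - z0)) ` K \<noteq> {}" using False by simp
    ultimately obtain mx where "mx \<in> (\<lambda>z. cmod (z - z0)) ` K" "\<forall>y\<in>(\<lambda>z. cmod (z - z0)) ` K. y \<le> mx"
      using compact_attains_sup by blast
    then obtain w where w: "w \<in> K" "\<And>z. z \<in> K \<Longrightarrow> cmod (z - z0) \<le> cmod (w - z0)"
      by auto
    show ?thesis
    proof (rule that[of "cmod (w - z0)"])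
      show "ereal (cmod (w - z0)) < r" using w(1) assms(2) unfolding disc_def by blast
      show "K \<subseteq> cball z0 (cmod (w - z0))" using w(2) by (auto simp: dist_norm norm_minus_commute)
    qed simp
  qed
  obtain \<rho> where "ereal s < ereal \<rho>" "ereal \<rho> < r" using ereal_dense2[OF s(2)] by blast
  then have "s < \<rho>" "ereal \<rho> < r" by simp_all
  then show ?thesis using that s by blast
qed

lemma higher_deriv_poly_at:
  fixes b :: "nat \<Rightarrow> complex"
  shows "(deriv ^^ m) (\<lambda>w. \<Sum>n\<le>j. b n * (w - z0) ^ n) z0 = (if m \<le> j then fact m * b m else 0)"
proof -
  have hd: "(deriv ^^ m) (\<lambda>w. \<Sum>n\<in>A. b n * (w - z0) ^ n) z0 =
      (\<Sum>n\<in>A. b n * (deriv ^^ m) (\<lambda>w. (w - z0) ^ n) z0)" if "finite A" for A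
    using that
  proof (induction A rule: finite_induct)
    case empty then show ?case by (simp add: higher_deriv_const)
  next
    case (insert a A)
    have "(deriv ^^ m) (\<lambda>w. \<Sum>n\<in>insert a A. b n * (w - z0) ^ n) z0 =
        (deriv ^^ m) (\<lambda>w. b a * (w - z0) ^ a + (\<Sum>n\<in>A. b n * (w - z0) ^ n)) z0"
      using insert by simp
    also have "\<dots> = (deriv ^^ m) (\<lambda>w. b a * (w - z0) ^ a) z0 + (deriv ^^ m) (\<lambda>w. \<Sum>n\<in>A. b n * (w - z0) ^ n) z0"
      by (rule higher_deriv_add[of _ UNIV]) (auto intro!: holomorphic_intros)
    also have "(deriv ^^ m) (\<lambda>w. b a * (w - z0) ^ a) z0 = b a * (deriv ^^ m) (\<lambda>w. (w - z0) ^ a) z0"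
      by (rule higher_deriv_cmult[of _ UNIV]) (auto intro!: holomorphic_intros)
    finally show ?case using insert by simp
  qed
  have pw: "(deriv ^^ m) (\<lambda>w. (w - z0) ^ n) z0 = (if n = m then fact m else 0)" for n
  proof -
    have "(deriv ^^ m) (\<lambda>w. (w - z0) ^ n) z0 = pochhammer (of_nat (Suc n - m)) m * (z0 - z0) ^ (n - m)"
      by (rule higher_deriv_power)
    also have "\<dots> = (if n = m then fact m else 0)"
    proof (cases "n = m")
      case True then show ?thesis by (simp add: pochhammer_fact)
    next
      case False
      show ?thesis
      proof (cases "n < m")
        case True
        then have "Suc n - m = 0" by simp
        then show ?thesis using True False by (simp add: pochhammer_0_left)
      next
        case False': False
        then show ?thesis using False by simp
      qed
    qed
    finally show ?thesis .
  qed
  have "(deriv ^^ m) (\<lambda>w. \<Sum>n\<le>j. b n * (w - z0) ^ n) z0 = (\<Sum>n\<le>j. b n * (if n = m then fact m else 0))"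
    using hd[of "{..j}"] pw by simp
  also have "\<dots> = (\<Sum>n\<le>j. if n = m then fact m * b m else 0)"
    by (rule sum.cong) auto
  also have "\<dots> = (if m \<le> j then fact m * b m else 0)"
    by (subst sum.delta) auto
  finally show ?thesis .
qed

context lcs_lc
begin

lemma Hol_deriv: "open D \<Longrightarrow> Hol g D \<Longrightarrow> Hol (cderiv smul P g) D"
  unfolding Hol_def[of "cderiv smul P g"]
proof
  fix z assume D: "open D" and h: "Hol g D" and z: "z \<in> D"
  obtain R where "R > 0" "cball z R \<subseteq> D" using open_contains_cball D z by blast
  then show "\<exists>d. has_cderiv smul P (cderiv smul P g) z d" using deriv_step[OF D h] by blast
qed

lemma Hol_all: "open D \<Longrightarrow> Hol g D \<Longrightarrow> Hol (cderiv_n smul P n g) D"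
  by (induction n) (auto intro: Hol_deriv)

end



locale setting = lcs_lc +
  fixes z0 :: complex and r :: ereal
  assumes rpos: "r > 0"
begin

abbreviation "\<Omega> \<equiv> disc z0 r"

definition Poly :: "nat \<Rightarrow> (nat \<Rightarrow> 'a) \<Rightarrow> complex \<Rightarrow> 'a" where
  "Poly j a = (\<lambda>z. if z \<in> \<Omega> then (\<Sum>n\<le>j. smul ((z - z0) ^ n / of_nat (fact n)) (a n)) else 0)"

lemma taylor_Poly: "taylor_proj smul P z0 r k f = Poly k (\<lambda>n. cderiv_n smul P n f z0)"
  unfolding taylor_proj_def Poly_def ..

lemma z0_in: "z0 \<in> \<Omega>" using centre_in_disc[OF rpos] .

lemma holo_iff: "f \<in> holo smul P \<Omega> \<longleftrightarrow> Hol f \<Omega> \<and> (\<forall>z. z \<notin> \<Omega> \<longrightarrow> f z = 0)"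
  unfolding holo_def Hol_def by simp

lemma holo_Hol_all: "f \<in> holo smul P \<Omega> \<Longrightarrow> Hol (cderiv_n smul P n f) \<Omega>"
  using Hol_all[OF disc_open] holo_iff by blast

lemma Poly_holo: "Poly j a \<in> holo smul P \<Omega>"
  unfolding holo_iff
proof (intro conjI allI impI)
  show "Hol (Poly j a) \<Omega>"
    unfolding Hol_def
  proof
    fix z assume z: "z \<in> \<Omega>"
    define u where "u n w = (w - z0) ^ n / of_nat (fact n)" for n w
    have du: "(u n has_field_derivative deriv (u n) z) (at z)" for n
    proof -
      have "u n holomorphic_on UNIV" unfolding u_def by (intro holomorphic_intros) simp
      then have "u n field_differentiable at z" using holomorphic_on_imp_differentiable_at by blast
      then show ?thesis using DERIV_deriv_iff_field_differentiable by blast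
    qed
    have "has_cderiv smul P (\<lambda>w. \<Sum>n\<le>j. smul (u n w) (a n)) z (\<Sum>n\<le>j. smul (deriv (u n) z) (a n))"
      by (rule has_cderiv_sum) (auto intro: has_cderiv_scalar du)
    then have "has_cderiv smul P (Poly j a) z (\<Sum>n\<le>j. smul (deriv (u n) z) (a n))"
      by (rule has_cderiv_transform[OF _ disc_open z]) (simp add: Poly_def u_def)
    then show "\<exists>d. has_cderiv smul P (Poly j a) z d" by blast
  qed
next
  fix z assume "z \<notin> \<Omega>" then show "Poly j a z = 0" unfolding Poly_def by simp
qed

lemma holo_Hol: "f \<in> holo smul P \<Omega> \<Longrightarrow> Hol f \<Omega>" using holo_iff by blast

lemma dual_holo_f:
  assumes "p \<in> P" "dual p \<phi>" "f \<in> holo smul P \<Omega>"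
  shows "(\<lambda>w. \<phi> (f w)) holomorphic_on \<Omega>"
  by (rule dual_holo(1)[OF assms(1,2) holo_Hol[OF assms(3)] disc_open])

lemma dual_derivs:
  assumes "p \<in> P" "dual p \<phi>" "f \<in> holo smul P \<Omega>" "w \<in> \<Omega>"
  shows "\<phi> (cderiv_n smul P n f w) = (deriv ^^ n) (\<lambda>w. \<phi> (f w)) w"
  by (rule dual_higher[OF assms(1,2) holo_Hol_all[OF assms(3)] disc_open assms(4)])

lemma Poly_derivs: "cderiv_n smul P m (Poly j a) z0 = (if m \<le> j then a m else 0)"
proof (rule eq_by_duals)
  fix p \<phi> assume pP: "p \<in> P" and dp: "dual p \<phi>"
  have lf: "lin_fun smul \<phi>" by (rule dual_lin[OF dp])
  have "\<phi> (cderiv_n smul P m (Poly j a) z0) = (deriv ^^ m) (\<lambda>w. \<phi> (Poly j a w)) z0"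
    by (rule dual_derivs[OF pP dp Poly_holo z0_in])
  also have "\<dots> = (deriv ^^ m) (\<lambda>w. \<Sum>n\<le>j. (\<phi> (a n) / of_nat (fact n)) * (w - z0) ^ n) z0"
  proof (rule higher_deriv_transform_within_open[OF _ _ disc_open z0_in])
    show "(\<lambda>w. \<phi> (Poly j a w)) holomorphic_on \<Omega>" by (rule dual_holo_f[OF pP dp Poly_holo])
    show "(\<lambda>w. \<Sum>n\<le>j. \<phi> (a n) / of_nat (fact n) * (w - z0) ^ n) holomorphic_on \<Omega>"
      by (intro holomorphic_intros)
    fix w assume "w \<in> \<Omega>"
    then show "\<phi> (Poly j a w) = (\<Sum>n\<le>j. \<phi> (a n) / of_nat (fact n) * (w - z0) ^ n)"
      unfolding Poly_def by (simp add: lin_fun_sum[OF lf] lin_fun_smul[OF lf] mult.commute)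
  qed
  also have "\<dots> = (if m \<le> j then fact m * (\<phi> (a m) / of_nat (fact m)) else 0)"
    by (rule higher_deriv_poly_at)
  also have "\<dots> = \<phi> (if m \<le> j then a m else 0)" by (simp add: lin_fun_zero[OF lf])
  finally show "\<phi> (cderiv_n smul P m (Poly j a) z0) = \<phi> (if m \<le> j then a m else 0)" .
qed

lemma Poly_Poly: "Poly k (\<lambda>n. cderiv_n smul P n (Poly j a) z0) = Poly (min j k) a"
proof (rule ext)
  fix z
  show "Poly k (\<lambda>n. cderiv_n smul P n (Poly j a) z0) z = Poly (min j k) a z"
  proof (cases "z \<in> \<Omega>")
    case True
    have "(\<Sum>n\<le>k. smul ((z - z0) ^ n / of_nat (fact n)) (if n \<le> j then a n else 0)) =
        (\<Sum>n\<le>k. if n \<le> j then smul ((z - z0) ^ n / of_nat (fact n)) (a n) else 0)"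
      by (rule sum.cong) auto
    also have "\<dots> = (\<Sum>n\<in>{n\<in>{..k}. n \<le> j}. smul ((z - z0) ^ n / of_nat (fact n)) (a n))"
      by (rule sum.inter_filter[symmetric]) simp
    also have "{n\<in>{..k}. n \<le> j} = {..min j k}" by auto
    finally have "(\<Sum>n\<le>k. smul ((z - z0) ^ n / of_nat (fact n)) (if n \<le> j then a n else 0)) =
        (\<Sum>n\<le>min j k. smul ((z - z0) ^ n / of_nat (fact n)) (a n))" .
    then show ?thesis unfolding Poly_derivs unfolding Poly_def using True by simp
  next
    case False then show ?thesis unfolding Poly_def by simp
  qed
qed

lemma holo_lincomb:
  assumes "f \<in> holo smul P \<Omega>" "g \<in> holo smul P \<Omega>"
  shows "(\<lambda>z. smul a (f z) + smul b (g z)) \<in> holo smul P \<Omega>"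
  unfolding holo_iff
proof (intro conjI allI impI)
  show "Hol (\<lambda>z. smul a (f z) + smul b (g z)) \<Omega>"
    unfolding Hol_def
    using has_cderiv_lincomb[OF Hol_cderiv[OF holo_Hol[OF assms(1)]] Hol_cderiv[OF holo_Hol[OF assms(2)]]] by blast
  fix z assume "z \<notin> \<Omega>" then show "smul a (f z) + smul b (g z) = 0" using assms unfolding holo_iff by simp
qed

lemma derivs_lincomb:
  assumes "f \<in> holo smul P \<Omega>" "g \<in> holo smul P \<Omega>"
  shows "cderiv_n smul P n (\<lambda>z. smul a (f z) + smul b (g z)) z0 =
    smul a (cderiv_n smul P n f z0) + smul b (cderiv_n smul P n g z0)"
proof (rule eq_by_duals)
  fix p \<phi> assume pP: "p \<in> P" and dp: "dual p \<phi>"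
  have lf: "lin_fun smul \<phi>" by (rule dual_lin[OF dp])
  have hf: "(\<lambda>w. \<phi> (f w)) holomorphic_on \<Omega>" by (rule dual_holo_f[OF pP dp assms(1)])
  have hg: "(\<lambda>w. \<phi> (g w)) holomorphic_on \<Omega>" by (rule dual_holo_f[OF pP dp assms(2)])
  have "\<phi> (cderiv_n smul P n (\<lambda>z. smul a (f z) + smul b (g z)) z0) =
      (deriv ^^ n) (\<lambda>w. \<phi> (smul a (f w) + smul b (g w))) z0"
    by (rule dual_derivs[OF pP dp holo_lincomb[OF assms] z0_in])
  also have "(\<lambda>w. \<phi> (smul a (f w) + smul b (g w))) = (\<lambda>w. a * \<phi> (f w) + b * \<phi> (g w))"
    using lf unfolding lin_fun_def by simp
  also have "(deriv ^^ n) (\<lambda>w. a * \<phi> (f w) + b * \<phi> (g w)) z0 =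
      (deriv ^^ n) (\<lambda>w. a * \<phi> (f w)) z0 + (deriv ^^ n) (\<lambda>w. b * \<phi> (g w)) z0"
    by (rule higher_deriv_add[OF _ _ disc_open z0_in]) (intro holomorphic_intros hf hg)+
  also have "(deriv ^^ n) (\<lambda>w. a * \<phi> (f w)) z0 = a * (deriv ^^ n) (\<lambda>w. \<phi> (f w)) z0"
    by (rule higher_deriv_cmult[OF hf z0_in disc_open])
  also have "(deriv ^^ n) (\<lambda>w. b * \<phi> (g w)) z0 = b * (deriv ^^ n) (\<lambda>w. \<phi> (g w)) z0"
    by (rule higher_deriv_cmult[OF hg z0_in disc_open])
  also have "a * (deriv ^^ n) (\<lambda>w. \<phi> (f w)) z0 + b * (deriv ^^ n) (\<lambda>w. \<phi> (g w)) z0 =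
      \<phi> (smul a (cderiv_n smul P n f z0) + smul b (cderiv_n smul P n g z0))"
    using dual_derivs[OF pP dp assms(1) z0_in] dual_derivs[OF pP dp assms(2) z0_in] lf
    unfolding lin_fun_def by simp
  finally show "\<phi> (cderiv_n smul P n (\<lambda>z. smul a (f z) + smul b (g z)) z0) =
      \<phi> (smul a (cderiv_n smul P n f z0) + smul b (cderiv_n smul P n g z0))" .
qed

end



context setting
begin

lemma holo_diff:
  assumes "f \<in> holo smul P \<Omega>" "g \<in> holo smul P \<Omega>"
  shows "(\<lambda>z. f z - g z) \<in> holo smul P \<Omega>"
  using holo_lincomb[OF assms, of 1 "-1"] by simp

lemma derivs_diff:
  assumes "f \<in> holo smul P \<Omega>" "g \<in> holo smul P \<Omega>"
  shows "cderiv_n smul P n (\<lambda>z. f z - g z) z0 = cderiv_n smul P n f z0 - cderiv_n smul P n g z0"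
  using derivs_lincomb[OF assms, of n 1 "-1"] by simp

lemma holo_bdd:
  assumes "f \<in> holo smul P \<Omega>" "compact K" "K \<subseteq> \<Omega>" "p \<in> P"
  shows "bdd_above ((\<lambda>z. p (f z)) ` K)"
  using Hol_bdd[OF holo_Hol[OF assms(1)] disc_open assms(2,3,4), of 0] by simp

lemma taylor_bound:
  assumes f: "f \<in> holo smul P \<Omega>" and pP: "p \<in> P" and s: "0 \<le> s" "s < \<rho>" and \<rho>: "ereal \<rho> < r"
    and M: "\<And>\<zeta>. \<zeta> \<in> cball z0 \<rho> \<Longrightarrow> p (f \<zeta>) \<le> M" and z: "z \<in> cball z0 s"
  shows "p (f z - taylor_proj smul P z0 r k f z) \<le> M * (s / \<rho>) ^ Suc k / (1 - s / \<rho>)"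
proof -
  have sub: "cball z0 \<rho> \<subseteq> \<Omega>" by (rule cball_in_disc[OF \<rho>])
  have zO: "z \<in> \<Omega>" using z s sub by (auto simp: subset_iff)
  define v where "v = f z - taylor_proj smul P z0 r k f z"
  obtain \<phi> where dp: "dual p \<phi>" and eq: "cmod (\<phi> v) = p v" using p_attained[OF pP] by blast
  have lf: "lin_fun smul \<phi>" by (rule dual_lin[OF dp])
  let ?\<psi> = "\<lambda>w. \<phi> (f w)"
  have "\<phi> v = ?\<psi> z - (\<Sum>n\<le>k. (deriv ^^ n) ?\<psi> z0 / fact n * (z - z0) ^ n)"
    unfolding v_def taylor_proj_def using zO
    by (simp add: lin_fun_diff[OF lf] lin_fun_sum[OF lf] lin_fun_smul[OF lf]
        dual_derivs[OF pP dp f z0_in] mult.commute)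
  also have "cmod \<dots> \<le> M * (s / \<rho>) ^ Suc k / (1 - s / \<rho>)"
  proof (rule taylor_remainder[OF dual_holo_f[OF pP dp f] disc_open sub _ s])
    show "cmod (?\<psi> \<zeta>) \<le> M" if "\<zeta> \<in> cball z0 \<rho>" for \<zeta>
      using dual_bound[OF dp, of "f \<zeta>"] M[OF that] by simp
    show "cmod (z - z0) \<le> s" using z by (simp add: dist_norm norm_minus_commute)
  qed
  finally show ?thesis using eq unfolding v_def by simp
qed

lemma poly_bound:
  assumes f: "f \<in> holo smul P \<Omega>" and pP: "p \<in> P" and s: "0 \<le> s" "s < \<rho>" and \<rho>: "ereal \<rho> < r"
    and M: "\<And>\<zeta>. \<zeta> \<in> cball z0 \<rho> \<Longrightarrow> p (f \<zeta>) \<le> M" and z: "z \<in> cball z0 s"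
  shows "p (taylor_proj smul P z0 r k f z) \<le> real (Suc k) * M"
proof -
  have sub: "cball z0 \<rho> \<subseteq> \<Omega>" by (rule cball_in_disc[OF \<rho>])
  have \<rho>0: "\<rho> > 0" using s by simp
  have zO: "z \<in> \<Omega>" using z s sub by (auto simp: subset_iff)
  define v where "v = taylor_proj smul P z0 r k f z"
  obtain \<phi> where dp: "dual p \<phi>" and eq: "cmod (\<phi> v) = p v" using p_attained[OF pP] by blast
  have lf: "lin_fun smul \<phi>" by (rule dual_lin[OF dp])
  let ?\<psi> = "\<lambda>w. \<phi> (f w)"
  have Mb: "cmod (?\<psi> \<zeta>) \<le> M" if "\<zeta> \<in> cball z0 \<rho>" for \<zeta>
    using dual_bound[OF dp, of "f \<zeta>"] M[OF that] by simp
  have "cmod (?\<psi> z0) \<le> M" using Mb \<rho>0 by simp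
  then have M0: "M \<ge> 0" by (rule order_trans[OF norm_ge_zero])
  have "\<phi> v = (\<Sum>n\<le>k. (deriv ^^ n) ?\<psi> z0 / fact n * (z - z0) ^ n)"
    unfolding v_def taylor_proj_def using zO
    by (simp add: lin_fun_sum[OF lf] lin_fun_smul[OF lf] dual_derivs[OF pP dp f z0_in] mult.commute)
  also have "cmod \<dots> \<le> (\<Sum>n\<le>k. M)"
  proof (rule order_trans[OF norm_sum sum_mono])
    fix n assume "n \<in> {..k}"
    have c: "cmod ((deriv ^^ n) ?\<psi> z0) \<le> fact n * M / \<rho> ^ n"
      by (rule cauchy_bound[OF dual_holo_f[OF pP dp f] disc_open sub \<rho>0 Mb])
    have zz: "cmod (z - z0) \<le> \<rho>" using z s by (simp add: dist_norm norm_minus_commute)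
    have "cmod ((deriv ^^ n) ?\<psi> z0 / fact n * (z - z0) ^ n) =
        cmod ((deriv ^^ n) ?\<psi> z0) / fact n * cmod (z - z0) ^ n"
      by (simp add: norm_mult norm_divide norm_power)
    also have "\<dots> \<le> (fact n * M / \<rho> ^ n) / fact n * \<rho> ^ n"
      using c zz M0 \<rho>0 by (intro mult_mono divide_right_mono power_mono) auto
    also have "\<dots> = M" using \<rho>0 by simp
    finally show "cmod ((deriv ^^ n) ?\<psi> z0 / fact n * (z - z0) ^ n) \<le> M" .
  qed
  also have "\<dots> = real (Suc k) * M" by simp
  finally show ?thesis using eq unfolding v_def by simp
qed

end



context setting
begin

abbreviation "Q k \<equiv> taylor_proj smul P z0 r k"

lemma Q_holo: "Q k f \<in> holo smul P \<Omega>"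
  unfolding taylor_Poly by (rule Poly_holo)

lemma SUP_le_bound:
  fixes F :: "complex \<Rightarrow> real"
  assumes "K \<noteq> {}" "\<And>z. z \<in> K \<Longrightarrow> F z \<le> b"
  shows "(SUP z\<in>K. F z) \<le> b"
  using assms by (rule cSUP_least)

lemma conv:
  assumes f: "f \<in> holo smul P \<Omega>"
  shows "limitin (holo_topology smul P \<Omega>) (\<lambda>k. Q k f) f sequentially"
  unfolding holo_topology_def
proof (rule pm_limitin_suff)
  show "f \<in> holo smul P \<Omega>" by fact
  show "eventually (\<lambda>k. Q k f \<in> holo smul P \<Omega>) sequentially" using Q_holo by simp
  fix d and e :: real
  assume d: "d \<in> {(\<lambda>f g. SUP z\<in>K. p (f z - g z)) | K p. compact K \<and> K \<noteq> {} \<and> K \<subseteq> \<Omega> \<and> p \<in> P}"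
    and e: "e > 0"
  then obtain K p where dK: "d = (\<lambda>f g. SUP z\<in>K. p (f z - g z))" and K: "compact K" "K \<noteq> {}" "K \<subseteq> \<Omega>"
    and pP: "p \<in> P" by blast
  obtain s \<rho> where s: "0 \<le> s" "s < \<rho>" and \<rho>: "ereal \<rho> < r" and Ks: "K \<subseteq> cball z0 s"
    using compact_in_disc[OF K(1,3) rpos] by blast
  have sub: "cball z0 \<rho> \<subseteq> \<Omega>" by (rule cball_in_disc[OF \<rho>])
  define M where "M = (SUP \<zeta>\<in>cball z0 \<rho>. p (f \<zeta>))"
  have bdd: "bdd_above ((\<lambda>z. p (f z)) ` cball z0 \<rho>)" by (rule holo_bdd[OF f compact_cball sub pP])
  have Mb: "p (f \<zeta>) \<le> M" if "\<zeta> \<in> cball z0 \<rho>" for \<zeta>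
    unfolding M_def using bdd that by (rule cSUP_upper2) simp
  have M0: "M \<ge> 0" using Mb[of z0] p_nonneg[OF pP, of "f z0"] s by simp
  define q where "q = s / \<rho>"
  have q: "0 \<le> q" "q < 1" unfolding q_def using s by auto
  have "(\<lambda>k. M * q ^ Suc k / (1 - q)) \<longlonglongrightarrow> 0"
  proof -
    have "(\<lambda>k. q ^ Suc k) \<longlonglongrightarrow> 0" using LIMSEQ_power_zero[of q] q by (intro LIMSEQ_Suc) simp
    then have "(\<lambda>k. M * q ^ Suc k) \<longlonglongrightarrow> 0" by (rule tendsto_mult_right_zero)
    then show ?thesis by (rule tendsto_divide_zero)
  qed
  then have ev: "eventually (\<lambda>k. M * q ^ Suc k / (1 - q) < e) sequentially"
    using e by (intro order_tendstoD) auto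
  then show "eventually (\<lambda>k. d f (Q k f) < e) sequentially"
  proof eventually_elim
    case (elim k)
    have "d f (Q k f) \<le> M * q ^ Suc k / (1 - q)"
      unfolding dK
    proof (rule SUP_le_bound[OF K(2)])
      fix z assume "z \<in> K"
      then show "p (f z - Q k f z) \<le> M * q ^ Suc k / (1 - q)"
        unfolding q_def using taylor_bound[OF f pP s \<rho> Mb] Ks by blast
    qed
    then show ?case using elim by simp
  qed
qed

lemma Q_diff:
  assumes "f \<in> holo smul P \<Omega>" "g \<in> holo smul P \<Omega>"
  shows "Q k f z - Q k g z = Q k (\<lambda>z. f z - g z) z"
  unfolding taylor_Poly derivs_diff[OF assms] Poly_def
  by (simp add: scale_right_diff_distrib sum_subtractf)

lemma cont: "continuous_map (holo_topology smul P \<Omega>) (holo_topology smul P \<Omega>) (Q k)"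
  unfolding continuous_map holo_topology_def pm_topspace
proof (intro conjI allI impI)
  show "Q k ` holo smul P \<Omega> \<subseteq> holo smul P \<Omega>" using Q_holo by blast
  let ?DS = "{(\<lambda>f g. SUP z\<in>K. p (f z - g z)) | K p. compact K \<and> K \<noteq> {} \<and> K \<subseteq> \<Omega> \<and> p \<in> P}"
  fix U assume U: "openin (pm_topology (holo smul P \<Omega>) ?DS) U"
  show "openin (pm_topology (holo smul P \<Omega>) ?DS) {x \<in> holo smul P \<Omega>. Q k x \<in> U}"
    unfolding pm_openin
  proof (intro conjI ballI)
    show "{x \<in> holo smul P \<Omega>. Q k x \<in> U} \<subseteq> holo smul P \<Omega>" by blast
    fix f assume "f \<in> {x \<in> holo smul P \<Omega>. Q k x \<in> U}"
    then have f: "f \<in> holo smul P \<Omega>" and QU: "Q k f \<in> U" by auto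
    obtain F e where F: "finite F" "F \<subseteq> ?DS" and e: "e > 0"
      and FU: "{y \<in> holo smul P \<Omega>. \<forall>d\<in>F. d (Q k f) y < e} \<subseteq> U"
      using U QU unfolding pm_openin by blast
    have "\<forall>d\<in>F. \<exists>x. d = (\<lambda>f g. SUP z\<in>fst x. snd x (f z - g z)) \<and> compact (fst x) \<and> fst x \<noteq> {} \<and>
         fst x \<subseteq> \<Omega> \<and> snd x \<in> P"
    proof
      fix d assume "d \<in> F"
      then obtain K p where "d = (\<lambda>f g. SUP z\<in>K. p (f z - g z))" "compact K" "K \<noteq> {}" "K \<subseteq> \<Omega>" "p \<in> P"
        using F(2) by blast
      then show "\<exists>x. d = (\<lambda>f g. SUP z\<in>fst x. snd x (f z - g z)) \<and> compact (fst x) \<and> fst x \<noteq> {} \<and>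
         fst x \<subseteq> \<Omega> \<and> snd x \<in> P" by (intro exI[of _ "(K, p)"]) simp
    qed
    from bchoice[OF this] obtain KP where KP0: "\<forall>d\<in>F. d = (\<lambda>f g. SUP z\<in>fst (KP d). snd (KP d) (f z - g z)) \<and>
        compact (fst (KP d)) \<and> fst (KP d) \<noteq> {} \<and> fst (KP d) \<subseteq> \<Omega> \<and> snd (KP d) \<in> P" ..
    note KP = bspec[OF KP0]
    have "\<forall>d\<in>F. \<exists>x. 0 \<le> fst x \<and> fst x < snd x \<and> ereal (snd x) < r \<and> fst (KP d) \<subseteq> cball z0 (fst x)"
    proof
      fix d assume "d \<in> F"
      then obtain s \<rho> where "0 \<le> s" "s < \<rho>" "ereal \<rho> < r" "fst (KP d) \<subseteq> cball z0 s"
        using compact_in_disc[of "fst (KP d)" z0 r] KP[OF \<open>d \<in> F\<close>] rpos by blast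
      then show "\<exists>x. 0 \<le> fst x \<and> fst x < snd x \<and> ereal (snd x) < r \<and> fst (KP d) \<subseteq> cball z0 (fst x)"
        by (intro exI[of _ "(s, \<rho>)"]) simp
    qed
    from bchoice[OF this] obtain SR where SR0: "\<forall>d\<in>F. 0 \<le> fst (SR d) \<and> fst (SR d) < snd (SR d) \<and>
        ereal (snd (SR d)) < r \<and> fst (KP d) \<subseteq> cball z0 (fst (SR d))" ..
    note SR = bspec[OF SR0]
    define d' where "d' d = (\<lambda>f g. SUP z\<in>cball z0 (snd (SR d)). snd (KP d) (f z - g z))" for d
    define e' where "e' = e / (real k + 2)"
    have e': "e' > 0" unfolding e'_def using e by simp
    show "\<exists>F e. finite F \<and> F \<subseteq> ?DS \<and> e > 0 \<and>
        {y \<in> holo smul P \<Omega>. \<forall>d\<in>F. d f y < e} \<subseteq> {x \<in> holo smul P \<Omega>. Q k x \<in> U}"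
    proof (intro exI[of _ "d' ` F"] exI[of _ e'] conjI)
      show "finite (d' ` F)" using F(1) by simp
      show "d' ` F \<subseteq> ?DS"
      proof
        fix x assume "x \<in> d' ` F"
        then obtain d where d: "d \<in> F" "x = d' d" by blast
        have "compact (cball z0 (snd (SR d)))" "cball z0 (snd (SR d)) \<noteq> {}"
          "cball z0 (snd (SR d)) \<subseteq> \<Omega>" "snd (KP d) \<in> P"
          using SR[OF d(1)] KP[OF d(1)] cball_in_disc[of "snd (SR d)" r z0] by auto
        then show "x \<in> ?DS" unfolding d(2) d'_def by blast
      qed
      show "e' > 0" by fact
      show "{y \<in> holo smul P \<Omega>. \<forall>d\<in>d' ` F. d f y < e'} \<subseteq> {x \<in> holo smul P \<Omega>. Q k x \<in> U}"
      proof
        fix g assume "g \<in> {y \<in> holo smul P \<Omega>. \<forall>d\<in>d' ` F. d f y < e'}"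
        then have g: "g \<in> holo smul P \<Omega>" and gd: "\<And>d. d \<in> F \<Longrightarrow> d' d f g < e'" by auto
        have "\<forall>d\<in>F. d (Q k f) (Q k g) < e"
        proof
          fix d assume dF: "d \<in> F"
          define K where "K = fst (KP d)"
          define p where "p = snd (KP d)"
          define s where "s = fst (SR d)"
          define \<rho> where "\<rho> = snd (SR d)"
          have dK: "d = (\<lambda>f g. SUP z\<in>K. p (f z - g z))" and K: "compact K" "K \<noteq> {}" "K \<subseteq> \<Omega>"
            and pP: "p \<in> P" using KP[OF dF] unfolding K_def p_def by auto
          have s: "0 \<le> s" "s < \<rho>" and \<rho>: "ereal \<rho> < r" and Ks: "K \<subseteq> cball z0 s"
            using SR[OF dF] unfolding K_def s_def \<rho>_def by auto
          have sub: "cball z0 \<rho> \<subseteq> \<Omega>" by (rule cball_in_disc[OF \<rho>])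
          have hd: "(\<lambda>z. f z - g z) \<in> holo smul P \<Omega>" by (rule holo_diff[OF f g])
          define M where "M = d' d f g"
          have M: "M = (SUP \<zeta>\<in>cball z0 \<rho>. p (f \<zeta> - g \<zeta>))" unfolding M_def d'_def p_def \<rho>_def ..
          have bdd: "bdd_above ((\<lambda>z. p (f z - g z)) ` cball z0 \<rho>)"
            by (rule holo_bdd[OF hd compact_cball sub pP])
          have Mb: "p (f \<zeta> - g \<zeta>) \<le> M" if "\<zeta> \<in> cball z0 \<rho>" for \<zeta>
            unfolding M using bdd that by (rule cSUP_upper2) simp
          have "d (Q k f) (Q k g) \<le> real (Suc k) * M"
            unfolding dK
          proof (rule SUP_le_bound[OF K(2)])
            fix z assume "z \<in> K"
            then have z: "z \<in> cball z0 s" using Ks by blast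
            show "p (Q k f z - Q k g z) \<le> real (Suc k) * M"
              unfolding Q_diff[OF f g] by (rule poly_bound[OF hd pP s \<rho> Mb z])
          qed
          also have "\<dots> < real (Suc k) * e' + e'"
          proof -
            have "M < e'" unfolding M_def by (rule gd[OF dF])
            then have "real (Suc k) * M \<le> real (Suc k) * e'" by simp
            then show ?thesis using e' by linarith
          qed
          also have "\<dots> = (real k + 2) * e'" by (simp add: algebra_simps)
          also have "\<dots> = e"
          proof -
            have nz: "real k + 2 \<noteq> 0" using of_nat_0_le_iff[of k] by linarith
            then show ?thesis unfolding e'_def by simp
          qed
          finally show "d (Q k f) (Q k g) < e" .
        qed
        then have "Q k g \<in> U" using FU Q_holo by blast
        then show "g \<in> {x \<in> holo smul P \<Omega>. Q k x \<in> U}" using g by blast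
      qed
    qed
  qed
qed

end



context setting
begin

lemma Q_lin: "lin_on smul (holo smul P \<Omega>) (Q k)"
  unfolding lin_on_def
proof (intro ballI allI)
  fix f g a b assume f: "f \<in> holo smul P \<Omega>" and g: "g \<in> holo smul P \<Omega>"
  show "Q k (\<lambda>z. smul a (f z) + smul b (g z)) = (\<lambda>z. smul a (Q k f z) + smul b (Q k g z))"
    unfolding taylor_Poly derivs_lincomb[OF f g]
    by (rule ext) (simp add: Poly_def scale_right_distrib sum.distrib scale_sum_right scale_left_commute mult.commute)
qed

lemma Q_idem: "Q k (Q j f) = Q (min j k) f"
  unfolding taylor_Poly by (rule Poly_Poly)

lemma Q_distinct:
  fixes x :: 'a
  assumes "k \<noteq> j" and x: "x \<noteq> 0"
  shows "\<exists>f\<in>holo smul P \<Omega>. Q k f \<noteq> Q j f"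
proof -
  define m where "m = max k j"
  define a where "a n = (if n = m then smul (of_nat (fact m)) x else 0)" for n
  define f where "f = Poly m a"
  obtain \<epsilon> where \<epsilon>: "0 < ereal \<epsilon>" "ereal \<epsilon> < r" using ereal_dense2[OF rpos] by blast
  define w where "w = z0 + complex_of_real \<epsilon>"
  have \<epsilon>0: "\<epsilon> > 0" using \<epsilon>(1) by (simp add: zero_ereal_def)
  have wO: "w \<in> \<Omega>" unfolding disc_def w_def using \<epsilon> \<epsilon>0 by simp
  have wz: "w - z0 \<noteq> 0" unfolding w_def using \<epsilon>0 by simp
  have val: "Q i f w = (if m \<le> i then smul ((w - z0) ^ m) x else 0)" for i
  proof -
    have "Q i f w = (\<Sum>n\<le>i. smul ((w - z0) ^ n / of_nat (fact n)) (if n \<le> m then a n else 0))"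
      unfolding taylor_Poly f_def Poly_derivs unfolding Poly_def using wO by simp
    also have "\<dots> = (\<Sum>n\<le>i. if n = m then smul ((w - z0) ^ m) x else 0)"
      by (rule sum.cong) (auto simp: a_def)
    also have "\<dots> = (if m \<le> i then smul ((w - z0) ^ m) x else 0)"
      by (subst sum.delta) auto
    finally show ?thesis .
  qed
  have nz: "smul ((w - z0) ^ m) x \<noteq> 0" using wz x by simp
  have "Q k f w \<noteq> Q j f w"
  proof (cases "k < j")
    case True
    then have "m = j" "\<not> m \<le> k" unfolding m_def by auto
    then show ?thesis using val[of k] val[of j] nz by simp
  next
    case False
    then have "m = k" "\<not> m \<le> j" using assms(1) unfolding m_def by auto
    then show ?thesis using val[of k] val[of j] nz by simp
  qed
  moreover have "f \<in> holo smul P \<Omega>" unfolding f_def by (rule Poly_holo)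
  ultimately show ?thesis by metis
qed

end

theorem theorem4p5:
  fixes smul :: "complex \<Rightarrow> 'a::ab_group_add \<Rightarrow> 'a"
    and P :: "('a \<Rightarrow> real) set"
    and z0 :: complex and r :: ereal
  assumes "lcHs smul P"
    and "locally_complete smul P"
    and "r > 0"
    and "\<exists>x::'a. x \<noteq> 0"
  shows "schauder_decomposition smul (holo smul P (disc z0 r))
           (holo_topology smul P (disc z0 r)) (\<lambda>k. taylor_proj smul P z0 r k)
     \<and> (\<forall>f \<in> holo smul P (disc z0 r).
          limitin (holo_topology smul P (disc z0 r)) (\<lambda>k. taylor_proj smul P z0 r k f) f sequentially)"
proof -
  have vs: "vector_space smul" and sn: "\<And>p. p \<in> P \<Longrightarrow> seminorm smul p"
    and sp: "\<And>x. x \<noteq> 0 \<Longrightarrow> \<exists>p\<in>P. p x \<noteq> 0"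
    using assms(1) unfolding lcHs_def by blast+
  interpret setting smul P z0 r
  proof (intro setting.intro lcs_lc.intro lcs.intro)
    show "vector_space smul" by (rule vs)
    show "lcs_axioms smul P" unfolding lcs_axioms_def using sn sp by blast
    show "lcs_lc_axioms smul P" unfolding lcs_lc_axioms_def by (rule assms(2))
    show "setting_axioms r" unfolding setting_axioms_def by (rule assms(3))
  qed
  obtain x :: 'a where x: "x \<noteq> 0" using assms(4) by blast
  show ?thesis
    unfolding schauder_decomposition_def
  proof (intro conjI allI ballI impI)
    fix k show "continuous_map (holo_topology smul P \<Omega>) (holo_topology smul P \<Omega>) (Q k)" by (rule cont)
  next
    fix k show "lin_on smul (holo smul P \<Omega>) (Q k)" by (rule Q_lin)
  next
    fix k j f show "Q k (Q j f) = Q (min j k) f" by (rule Q_idem)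
  next
    fix k j :: nat assume "k \<noteq> j"
    then show "\<exists>f\<in>holo smul P \<Omega>. Q k f \<noteq> Q j f" using Q_distinct x by blast
  next
    fix f assume "f \<in> holo smul P \<Omega>"
    then show "limitin (holo_topology smul P \<Omega>) (\<lambda>k. Q k f) f sequentially" by (rule conv)
  next
    fix f assume "f \<in> holo smul P \<Omega>"
    then show "limitin (holo_topology smul P \<Omega>) (\<lambda>k. Q k f) f sequentially" by (rule conv)
  qed
qed


end
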